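(* Let $G$ be a GTG on $n$ nodes in the $d$-dimensional toric unit cube $[0,1]^d$ at the connectivity threshold, i.e. with threshold function $\theta_n=cn/\log n$ where $c<\sup_{\alpha\in(0,1)}\alpha F^{-1}(1-\alpha)/4$. Then with high probability the number of edges satisfies $|E(G)|=\Theta(n\log n)$.
   Context: GTG model: $n$ nodes are placed independently and uniformly at random in the toric unit cube $[0,1]^d$, $d\ge2$ (toric Euclidean distances $r_{ij}$). Each node independently receives a weight from a continuous density $f$ on $\mathbb{R}^+$ with finite mean and variance, with cdf $F$ and quantile $F^{-1}(p)=\inf\{x\ge0:p\le F(x)\}$, satisfying $\mathbb{P}[W\ge x]=O(1/x^{d+\nu})$ for a constant $\nu>0$. Nodes $i,j$ are adjacent iff $(w_i+w_j)/r_{ij}^d\ge\theta_n$. "With high probability" means with probability $1-o(1)$ as $n\to\infty$. *)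

theory Defs
  imports "HOL-Probability.Probability"
begin

definition toric_dist :: "real^('d::finite) \<Rightarrow> real^('d::finite) \<Rightarrow> real" where
  "toric_dist x y = sqrt (\<Sum>i\<in>UNIV. (min \<bar>x$i - y$i\<bar> (1 - \<bar>x$i - y$i\<bar>))\<^sup>2)"

definition node_measure :: "(real \<Rightarrow> real) \<Rightarrow> ((real^('d::finite)) \<times> real) measure" where
  "node_measure f = uniform_measure lborel (cbox (0::real^('d::finite)) One) \<Otimes>\<^sub>M density lborel (\<lambda>x. ennreal (f x))"

definition gtg_space :: "(real \<Rightarrow> real) \<Rightarrow> nat \<Rightarrow> (nat \<Rightarrow> (real^('d::finite)) \<times> real) measure" where
  "gtg_space f n = PiM {..<n} (\<lambda>_. node_measure f)"

definition gtg_adj :: "real \<Rightarrow> (nat \<Rightarrow> (real^('d::finite)) \<times> real) \<Rightarrow> nat \<Rightarrow> nat \<Rightarrow> bool" where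
  "gtg_adj theta \<omega> i j =
     ((snd (\<omega> i) + snd (\<omega> j)) / (toric_dist (fst (\<omega> i)) (fst (\<omega> j))) ^ CARD('d) \<ge> theta)"

definition gtg_edges :: "real \<Rightarrow> nat \<Rightarrow> (nat \<Rightarrow> (real^('d::finite)) \<times> real) \<Rightarrow> nat" where
  "gtg_edges theta n \<omega> = card {(i, j). i < j \<and> j < n \<and> gtg_adj theta \<omega> i j}"

definition cdf_of :: "(real \<Rightarrow> real) \<Rightarrow> real \<Rightarrow> real" where
  "cdf_of f x = (LINT t:{..x}|lborel. f t)"

definition quantile_of :: "(real \<Rightarrow> real) \<Rightarrow> real \<Rightarrow> real" where
  "quantile_of f p = Inf {x. 0 \<le> x \<and> p \<le> cdf_of f x}"

end

theory Submission
  imports Defs "HOL-Real_Asymp.Real_Asymp"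
begin


lemma coord_indep:
  assumes N: "prob_space N" and I: "I \<noteq> {}"
  shows "prob_space.indep_vars (PiM I (\<lambda>_. N)) (\<lambda>_. N) (\<lambda>i \<omega>. \<omega> i) I"
proof -
  interpret P: prob_space "PiM I (\<lambda>_. N)" by (intro prob_space_PiM N)
  have "distr (PiM I (\<lambda>_. N)) (PiM I (\<lambda>_. N)) (\<lambda>x. \<lambda>i\<in>I. x i) = distr (PiM I (\<lambda>_. N)) (PiM I (\<lambda>_. N)) (\<lambda>x. x)"
    by (rule distr_cong) (auto simp: space_PiM)
  also have "\<dots> = PiM I (\<lambda>_. N)" by simp
  also have "\<dots> = PiM I (\<lambda>i. distr (PiM I (\<lambda>_. N)) N (\<lambda>\<omega>. \<omega> i))"
    by (rule PiM_cong) (auto simp: distr_PiM_component[of I "\<lambda>_. N", OF N])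
  finally show ?thesis
    by (subst P.indep_vars_iff_distr_eq_PiM'[OF I]) auto
qed


lemma indep_restrict_two:
  assumes N: "prob_space N" and AB: "A \<inter> B = {}" "A \<subseteq> I" "B \<subseteq> I" "A \<noteq> {}"
  shows "prob_space.indep_var (PiM I (\<lambda>_. N)) (PiM A (\<lambda>_. N)) (\<lambda>\<omega>. restrict \<omega> A) (PiM B (\<lambda>_. N)) (\<lambda>\<omega>. restrict \<omega> B)"
proof -
  interpret P: prob_space "PiM I (\<lambda>_. N)" by (intro prob_space_PiM N)
  have "I \<noteq> {}" using AB by auto
  from P.indep_var_restrict[OF coord_indep[OF N this] AB(1-3)] show ?thesis by simp
qed

lemma pair_distr:
  assumes N: "prob_space N" and ij: "i \<in> I" "j \<in> I" "i \<noteq> j"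
  shows "distr (PiM I (\<lambda>_. N)) (N \<Otimes>\<^sub>M N) (\<lambda>\<omega>. (\<omega> i, \<omega> j)) = N \<Otimes>\<^sub>M N"
proof -
  interpret P: prob_space "PiM I (\<lambda>_. N)" by (intro prob_space_PiM N)
  have ind: "P.indep_var (PiM {i} (\<lambda>_. N)) (\<lambda>\<omega>. restrict \<omega> {i}) (PiM {j} (\<lambda>_. N)) (\<lambda>\<omega>. restrict \<omega> {j})"
    using ij by (intro indep_restrict_two N) auto
  have m1: "(\<lambda>x. x i) \<in> measurable (PiM {i} (\<lambda>_. N)) N" by measurable
  have m2: "(\<lambda>x. x j) \<in> measurable (PiM {j} (\<lambda>_. N)) N" by measurable
  have "P.indep_var N ((\<lambda>x. x i) \<circ> (\<lambda>\<omega>. restrict \<omega> {i})) N ((\<lambda>x. x j) \<circ> (\<lambda>\<omega>. restrict \<omega> {j}))"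
    by (rule P.indep_var_compose[OF ind m1 m2])
  then have "P.indep_var N (\<lambda>\<omega>. \<omega> i) N (\<lambda>\<omega>. \<omega> j)" by (simp add: o_def)
  then have "distr (PiM I (\<lambda>_. N)) N (\<lambda>\<omega>. \<omega> i) \<Otimes>\<^sub>M distr (PiM I (\<lambda>_. N)) N (\<lambda>\<omega>. \<omega> j) = distr (PiM I (\<lambda>_. N)) (N \<Otimes>\<^sub>M N) (\<lambda>\<omega>. (\<omega> i, \<omega> j))"
    by (simp add: P.indep_var_distribution_eq)
  then show ?thesis using ij by (simp add: distr_PiM_component[of I "\<lambda>_. N", OF N])
qed

lemma pair_prob:
  assumes N: "prob_space N" and ij: "i \<in> I" "j \<in> I" "i \<noteq> j" and R: "R \<in> sets (N \<Otimes>\<^sub>M N)"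
  shows "measure (PiM I (\<lambda>_. N)) {\<omega>\<in>space (PiM I (\<lambda>_. N)). (\<omega> i, \<omega> j) \<in> R} = measure (N \<Otimes>\<^sub>M N) R"
proof -
  have "measure (N \<Otimes>\<^sub>M N) R = measure (distr (PiM I (\<lambda>_. N)) (N \<Otimes>\<^sub>M N) (\<lambda>\<omega>. (\<omega> i, \<omega> j))) R"
    by (simp add: pair_distr[OF N ij])
  also have "\<dots> = measure (PiM I (\<lambda>_. N)) ((\<lambda>\<omega>. (\<omega> i, \<omega> j)) -` R \<inter> space (PiM I (\<lambda>_. N)))"
    using ij R by (subst measure_distr) auto
  finally show ?thesis by (simp add: Int_def conj_commute)
qed

lemma disj_prob:
  assumes N: "prob_space N" and ij: "i \<in> I" "j \<in> I" "k \<in> I" "l \<in> I" "{i,j} \<inter> {k,l} = {}"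
    and R: "R \<in> sets (N \<Otimes>\<^sub>M N)"
  shows "measure (PiM I (\<lambda>_. N)) {\<omega>\<in>space (PiM I (\<lambda>_. N)). (\<omega> i, \<omega> j) \<in> R \<and> (\<omega> k, \<omega> l) \<in> R}
     = measure (PiM I (\<lambda>_. N)) {\<omega>\<in>space (PiM I (\<lambda>_. N)). (\<omega> i, \<omega> j) \<in> R} * measure (PiM I (\<lambda>_. N)) {\<omega>\<in>space (PiM I (\<lambda>_. N)). (\<omega> k, \<omega> l) \<in> R}"
proof -
  interpret P: prob_space "PiM I (\<lambda>_. N)" by (intro prob_space_PiM N)
  have ind: "P.indep_var (PiM {i,j} (\<lambda>_. N)) (\<lambda>\<omega>. restrict \<omega> {i,j}) (PiM {k,l} (\<lambda>_. N)) (\<lambda>\<omega>. restrict \<omega> {k,l})"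
    using ij by (intro indep_restrict_two N) auto
  have m1: "(\<lambda>x. (x i, x j)) \<in> measurable (PiM {i,j} (\<lambda>_. N)) (N \<Otimes>\<^sub>M N)" by measurable
  have m2: "(\<lambda>x. (x k, x l)) \<in> measurable (PiM {k,l} (\<lambda>_. N)) (N \<Otimes>\<^sub>M N)" by measurable
  have "P.indep_var (N \<Otimes>\<^sub>M N) ((\<lambda>x. (x i, x j)) \<circ> (\<lambda>\<omega>. restrict \<omega> {i,j})) (N \<Otimes>\<^sub>M N) ((\<lambda>x. (x k, x l)) \<circ> (\<lambda>\<omega>. restrict \<omega> {k,l}))"
    by (rule P.indep_var_compose[OF ind m1 m2])
  then have ind2: "P.indep_var (N \<Otimes>\<^sub>M N) (\<lambda>\<omega>. (\<omega> i, \<omega> j)) (N \<Otimes>\<^sub>M N) (\<lambda>\<omega>. (\<omega> k, \<omega> l))" by (simp add: o_def)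
  from P.indep_varD[OF ind2 R R] show ?thesis
    by (simp add: vimage_def Int_def conj_commute)
qed


lemma share_prob:
  assumes N: "prob_space N" and sN: "space N = UNIV" and ij: "s \<in> I" "a \<in> I" "b \<in> I" "s \<noteq> a" "s \<noteq> b" "a \<noteq> b"
    and R: "R \<in> sets (N \<Otimes>\<^sub>M N)"
  shows "emeasure (PiM I (\<lambda>_. N)) {\<omega>\<in>space (PiM I (\<lambda>_. N)). (\<omega> s, \<omega> a) \<in> R \<and> (\<omega> s, \<omega> b) \<in> R}
     = (\<integral>\<^sup>+u. emeasure N (Pair u -` R) ^ 2 \<partial>N)"
proof -
  interpret P: prob_space "PiM I (\<lambda>_. N)" by (intro prob_space_PiM N)
  interpret NN: prob_space N by fact
  interpret N2: prob_space "N \<Otimes>\<^sub>M N" by (intro prob_space_pair N)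
  define M where "M = PiM I (\<lambda>_. N)"
  have mg[measurable]: "(\<lambda>u. emeasure N (Pair u -` R)) \<in> borel_measurable N" by (rule NN.measurable_emeasure_Pair[OF R])
  have ind: "P.indep_var (PiM {s} (\<lambda>_. N)) (\<lambda>\<omega>. restrict \<omega> {s}) (PiM {a,b} (\<lambda>_. N)) (\<lambda>\<omega>. restrict \<omega> {a,b})"
    using ij by (intro indep_restrict_two N) auto
  have m1: "(\<lambda>x. (x s, x s)) \<in> measurable (PiM {s} (\<lambda>_. N)) (N \<Otimes>\<^sub>M N)" by measurable
  have m2: "(\<lambda>x. (x a, x b)) \<in> measurable (PiM {a,b} (\<lambda>_. N)) (N \<Otimes>\<^sub>M N)" by measurable
  have "P.indep_var (N \<Otimes>\<^sub>M N) ((\<lambda>x. (x s, x s)) \<circ> (\<lambda>\<omega>. restrict \<omega> {s})) (N \<Otimes>\<^sub>M N) ((\<lambda>x. (x a, x b)) \<circ> (\<lambda>\<omega>. restrict \<omega> {a,b}))"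
    by (rule P.indep_var_compose[OF ind m1 m2])
  then have ind2: "P.indep_var (N \<Otimes>\<^sub>M N) (\<lambda>\<omega>. (\<omega> s, \<omega> s)) (N \<Otimes>\<^sub>M N) (\<lambda>\<omega>. (\<omega> a, \<omega> b))" by (simp add: o_def)
  define D1 where "D1 = distr M (N \<Otimes>\<^sub>M N) (\<lambda>\<omega>. (\<omega> s, \<omega> s))"
  from ind2 have "D1 \<Otimes>\<^sub>M distr (PiM I (\<lambda>_. N)) (N \<Otimes>\<^sub>M N) (\<lambda>\<omega>. (\<omega> a, \<omega> b))
     = distr M ((N \<Otimes>\<^sub>M N) \<Otimes>\<^sub>M (N \<Otimes>\<^sub>M N)) (\<lambda>\<omega>. ((\<omega> s, \<omega> s), (\<omega> a, \<omega> b)))"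
    by (simp add: P.indep_var_distribution_eq D1_def M_def)
  then have D: "distr M ((N \<Otimes>\<^sub>M N) \<Otimes>\<^sub>M (N \<Otimes>\<^sub>M N)) (\<lambda>\<omega>. ((\<omega> s, \<omega> s), (\<omega> a, \<omega> b))) = D1 \<Otimes>\<^sub>M (N \<Otimes>\<^sub>M N)"
    using ij by (simp add: pair_distr[OF N])
  define S where "S = {x \<in> space ((N \<Otimes>\<^sub>M N) \<Otimes>\<^sub>M (N \<Otimes>\<^sub>M N)). (fst (fst x), fst (snd x)) \<in> R \<and> (fst (fst x), snd (snd x)) \<in> R}"
  have S: "S \<in> sets ((N \<Otimes>\<^sub>M N) \<Otimes>\<^sub>M (N \<Otimes>\<^sub>M N))" unfolding S_def using R by measurable
  have sD1: "sets D1 = sets (N \<Otimes>\<^sub>M N)" by (simp add: D1_def)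
  have S': "S \<in> sets (D1 \<Otimes>\<^sub>M (N \<Otimes>\<^sub>M N))" using S by (simp add: sets_pair_measure_cong[OF sD1 refl])
  have "emeasure (D1 \<Otimes>\<^sub>M (N \<Otimes>\<^sub>M N)) S = emeasure (distr M ((N \<Otimes>\<^sub>M N) \<Otimes>\<^sub>M (N \<Otimes>\<^sub>M N)) (\<lambda>\<omega>. ((\<omega> s, \<omega> s), (\<omega> a, \<omega> b)))) S"
    by (simp add: D)
  also have "\<dots> = emeasure M ((\<lambda>\<omega>. ((\<omega> s, \<omega> s), (\<omega> a, \<omega> b))) -` S \<inter> space M)"
    using ij S by (subst emeasure_distr) (auto simp: M_def)
  also have "(\<lambda>\<omega>. ((\<omega> s, \<omega> s), (\<omega> a, \<omega> b))) -` S \<inter> space M = {\<omega>\<in>space M. (\<omega> s, \<omega> a) \<in> R \<and> (\<omega> s, \<omega> b) \<in> R}"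
    by (auto simp: S_def space_pair_measure sN)
  finally have 1: "emeasure M {\<omega>\<in>space M. (\<omega> s, \<omega> a) \<in> R \<and> (\<omega> s, \<omega> b) \<in> R} = emeasure (D1 \<Otimes>\<^sub>M (N \<Otimes>\<^sub>M N)) S" ..
  have "emeasure (D1 \<Otimes>\<^sub>M (N \<Otimes>\<^sub>M N)) S = (\<integral>\<^sup>+x. emeasure (N \<Otimes>\<^sub>M N) (Pair x -` S) \<partial>D1)"
    by (rule N2.emeasure_pair_measure_alt[OF S'])
  also have "\<dots> = (\<integral>\<^sup>+x. emeasure N (Pair (fst x) -` R) ^ 2 \<partial>D1)"
  proof (rule nn_integral_cong)
    fix x :: "'a \<times> 'a"
    have "Pair x -` S = (Pair (fst x) -` R) \<times> (Pair (fst x) -` R)"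
      by (auto simp: S_def space_pair_measure sN)
    then show "emeasure (N \<Otimes>\<^sub>M N) (Pair x -` S) = emeasure N (Pair (fst x) -` R) ^ 2"
      using R by (simp add: NN.emeasure_pair_measure_Times power2_eq_square)
  qed
  also have "\<dots> = (\<integral>\<^sup>+\<omega>. emeasure N (Pair (\<omega> s) -` R) ^ 2 \<partial>M)"
    unfolding D1_def using ij
    by (subst nn_integral_distr) (auto simp: M_def)
  also have "\<dots> = (\<integral>\<^sup>+u. emeasure N (Pair u -` R) ^ 2 \<partial>(distr M N (\<lambda>\<omega>. \<omega> s)))"
    using ij by (subst nn_integral_distr) (auto simp: M_def)
  also have "\<dots> = (\<integral>\<^sup>+u. emeasure N (Pair u -` R) ^ 2 \<partial>N)"
    using ij by (simp add: M_def distr_PiM_component[of I "\<lambda>_. N", OF N])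
  finally show ?thesis using 1 by (simp add: M_def)
qed


lemma card_pairs_bounds:
  "card {(i,j). i<j \<and> j<(n::nat)} \<le> n^2" "real n ^ 2 - real n \<le> 2 * real (card {(i,j). i<j \<and> j<(n::nat)})"
proof -
  let ?P = "{(i,j). i<j \<and> j<(n::nat)}"
  have sub: "?P \<subseteq> {..<n} \<times> {..<n}" by auto
  show "card ?P \<le> n^2"
    using card_mono[OF _ sub] by (simp add: power2_eq_square)
  have fin: "finite ?P" using finite_subset[OF sub] by auto
  have "{..<n} \<times> {..<n} \<subseteq> ?P \<union> (prod.swap ` ?P) \<union> ((\<lambda>i. (i,i)) ` {..<n})"
  proof
    fix x assume "x \<in> {..<n} \<times> {..<n}"
    then obtain i j where x: "x = (i,j)" "i<n" "j<n" by auto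
    consider "i<j" | "j<i" | "i=j" by linarith
    then show "x \<in> ?P \<union> (prod.swap ` ?P) \<union> ((\<lambda>i. (i,i)) ` {..<n})"
      using x by cases (auto simp: image_iff)
  qed
  then have "card ({..<n} \<times> {..<n}) \<le> card (?P \<union> (prod.swap ` ?P) \<union> ((\<lambda>i. (i,i)) ` {..<n}))"
    using fin by (intro card_mono) auto
  also have "\<dots> \<le> card ?P + card (prod.swap ` ?P) + card ((\<lambda>i. (i,i)) ` {..<n})"
    by (meson add_mono card_Un_le le_trans order_refl)
  also have "\<dots> \<le> card ?P + card ?P + n"
    by (intro add_mono card_image_le fin order_refl) (metis card_image_le card_lessThan finite_lessThan)
  finally have "n * n \<le> 2 * card ?P + n" by simp
  then have "real (n*n) \<le> real (2 * card ?P + n)" by linarith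
  then show "real n ^ 2 - real n \<le> 2 * real (card ?P)" by (simp add: power2_eq_square)
qed

lemma share_card:
  "card {(e,e'). e \<in> {(i,j). i<j \<and> j<(n::nat)} \<and> e' \<in> {(i,j). i<j \<and> j<n} \<and> \<not> ({fst e, snd e} \<inter> {fst e', snd e'} = {})} \<le> 4 * n^3"
proof -
  let ?T = "{..<n} \<times> {..<n} \<times> {..<n}"
  let ?S = "{(e,e'). e \<in> {(i,j). i<j \<and> j<(n::nat)} \<and> e' \<in> {(i,j). i<j \<and> j<n} \<and> \<not> ({fst e, snd e} \<inter> {fst e', snd e'} = {})}"
  define f1 where "f1 = (\<lambda>(i::nat,j::nat,l::nat). ((i,j),(i,l)))"
  define f2 where "f2 = (\<lambda>(i::nat,j::nat,l::nat). ((i,j),(l,i)))"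
  define f3 where "f3 = (\<lambda>(i::nat,j::nat,l::nat). ((i,j),(j,l)))"
  define f4 where "f4 = (\<lambda>(i::nat,j::nat,l::nat). ((i,j),(l,j)))"
  have "?S \<subseteq> f1 ` ?T \<union> f2 ` ?T \<union> f3 ` ?T \<union> f4 ` ?T"
  proof
    fix x assume x: "x \<in> ?S"
    then obtain i j k l where xx: "x = ((i,j),(k,l))" "i<j" "j<n" "k<l" "l<n" and sh: "i = k \<or> i = l \<or> j = k \<or> j = l"
      by auto
    show "x \<in> f1 ` ?T \<union> f2 ` ?T \<union> f3 ` ?T \<union> f4 ` ?T"
      using sh
    proof (elim disjE)
      assume "i = k" then have "x = f1 (i,j,l)" using xx by (simp add: f1_def)
      then have "x \<in> f1 ` ?T" using xx by (intro rev_image_eqI[of "(i,j,l)"]) auto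
      then show ?thesis by blast
    next
      assume "i = l" then have "x = f2 (i,j,k)" using xx by (simp add: f2_def)
      then have "x \<in> f2 ` ?T" using xx by (intro rev_image_eqI[of "(i,j,k)"]) auto
      then show ?thesis by blast
    next
      assume "j = k" then have "x = f3 (i,j,l)" using xx by (simp add: f3_def)
      then have "x \<in> f3 ` ?T" using xx by (intro rev_image_eqI[of "(i,j,l)"]) auto
      then show ?thesis by blast
    next
      assume "j = l" then have "x = f4 (i,j,k)" using xx by (simp add: f4_def)
      then have "x \<in> f4 ` ?T" using xx by (intro rev_image_eqI[of "(i,j,k)"]) auto
      then show ?thesis by blast
    qed
  qed
  then have "card ?S \<le> card (f1 ` ?T \<union> f2 ` ?T \<union> f3 ` ?T \<union> f4 ` ?T)"
    by (intro card_mono) auto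
  also have "\<dots> \<le> card (f1 ` ?T) + card (f2 ` ?T) + card (f3 ` ?T) + card (f4 ` ?T)"
    by (meson add_mono card_Un_le le_trans order_refl)
  also have "\<dots> \<le> card ?T + card ?T + card ?T + card ?T"
    by (intro add_mono card_image_le) auto
  also have "card ?T = n^3" by (simp add: card_cartesian_product power3_eq_cube)
  finally show ?thesis by simp
qed


lemma edges_conc:
  fixes N :: "'a measure" and R :: "('a\<times>'a) set" and n :: nat and q lo hi :: real
  assumes N: "prob_space N" and sN: "space N = UNIV" and R: "R \<in> sets (N \<Otimes>\<^sub>M N)"
    and sym: "\<And>u v. (u,v)\<in>R \<longleftrightarrow> (v,u)\<in>R"
    and qe: "(\<integral>\<^sup>+u. emeasure N (Pair u -` R) ^ 2 \<partial>N) \<le> ennreal q"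
    and ppos: "measure (N \<Otimes>\<^sub>M N) R > 0" and n2: "n \<ge> 2" and q0: "q \<ge> 0"
    and ab: "lo \<le> real (card {(i,j). i<j \<and> j<n}) * measure (N \<Otimes>\<^sub>M N) R / 2"
            "3 * real (card {(i,j). i<j \<and> j<n}) * measure (N \<Otimes>\<^sub>M N) R / 2 \<le> hi"
  shows "measure (PiM {..<n} (\<lambda>_. N)) {\<omega>\<in>space (PiM {..<n} (\<lambda>_. N)).
            lo \<le> real (card {(i,j). i<j \<and> j<n \<and> (\<omega> i, \<omega> j)\<in>R}) \<and> real (card {(i,j). i<j \<and> j<n \<and> (\<omega> i, \<omega> j)\<in>R}) \<le> hi}
          \<ge> 1 - 4 * (real (card {(i,j). i<j \<and> j<n}) * measure (N \<Otimes>\<^sub>M N) R + 4 * real n ^ 3 * q)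
                / (real (card {(i,j). i<j \<and> j<n}) * measure (N \<Otimes>\<^sub>M N) R) ^ 2"
proof -
  define M where "M = PiM {..<n} (\<lambda>_. N)"
  define p where "p = measure (N \<Otimes>\<^sub>M N) R"
  define PP where "PP = {(i,j). i<j \<and> j<(n::nat)}"
  define m where "m = real (card PP)"
  interpret P: prob_space M unfolding M_def by (intro prob_space_PiM N)
  interpret NN: prob_space N by fact
  interpret N2: prob_space "N \<Otimes>\<^sub>M N" by (intro prob_space_pair N)
  have finPP: "finite PP" unfolding PP_def by (rule finite_subset[of _ "{..<n}\<times>{..<n}"]) auto
  have m1: "m \<ge> 1"
  proof -
    have "(0,1) \<in> PP" using n2 by (auto simp: PP_def)
    then have "card PP \<ge> 1" using finPP by (metis One_nat_def Suc_leI card_gt_0_iff empty_iff)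
    then show ?thesis by (simp add: m_def)
  qed
  define A where "A e = {\<omega>\<in>space M. (\<omega> (fst e), \<omega> (snd e)) \<in> R}" for e :: "nat\<times>nat"
  have Ae[measurable]: "A e \<in> sets M" if "e \<in> PP" for e
  proof -
    have "fst e \<in> {..<n}" "snd e \<in> {..<n}" using that by (auto simp: PP_def)
    then show ?thesis using R unfolding A_def M_def by measurable
  qed
  define X where "X \<omega> = (\<Sum>e\<in>PP. indicator (A e) \<omega> :: real)" for \<omega>
  have Xeq: "real (card {(i,j). i<j \<and> j<n \<and> (\<omega> i, \<omega> j)\<in>R}) = X \<omega>" if "\<omega> \<in> space M" for \<omega>
  proof -
    have "{(i,j). i<j \<and> j<n \<and> (\<omega> i, \<omega> j)\<in>R} = {e\<in>PP. (\<omega> (fst e), \<omega> (snd e)) \<in> R}"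
      by (auto simp: PP_def)
    then have "card {(i,j). i<j \<and> j<n \<and> (\<omega> i, \<omega> j)\<in>R} = card {e\<in>PP. (\<omega> (fst e), \<omega> (snd e)) \<in> R}"
      by simp
    also have "\<dots> = (\<Sum>e\<in>PP. if (\<omega> (fst e), \<omega> (snd e)) \<in> R then 1 else 0)"
      by (subst sum.inter_filter[OF finPP, symmetric]) simp
    finally show ?thesis using that by (auto simp add: X_def A_def indicator_def of_nat_sum intro!: sum.cong)
  qed
  have Xm[measurable]: "X \<in> borel_measurable M" unfolding X_def by measurable
  have intA: "integrable M (indicator (A e) :: _ \<Rightarrow> real)" if "e \<in> PP" for e
    using that by (intro P.integrable_const_bound[where B=1]) (auto simp: indicator_def)
  have intX: "integrable M X" unfolding X_def using intA by auto
  have pA: "P.prob (A e) = p" if "e \<in> PP" for e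
    using that pair_prob[OF N _ _ _ R, of "fst e" "{..<n}" "snd e"] by (auto simp: A_def M_def p_def PP_def)
  have EX: "P.expectation X = m * p"
  proof -
    have "P.expectation X = (\<Sum>e\<in>PP. P.expectation (indicator (A e)))"
      unfolding X_def by (rule Bochner_Integration.integral_sum) (use intA in auto)
    also have "\<dots> = (\<Sum>e\<in>PP. p)"
    proof (rule sum.cong)
      fix e assume "e \<in> PP"
      have "A e \<inter> space M = A e" by (auto simp: A_def)
      then show "P.expectation (indicator (A e)) = p" using pA[OF \<open>e \<in> PP\<close>] by simp
    qed simp
    finally show ?thesis by (simp add: m_def)
  qed
  have X2: "X \<omega> ^ 2 = (\<Sum>e\<in>PP. \<Sum>e'\<in>PP. indicator (A e \<inter> A e') \<omega>)" for \<omega>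
    unfolding X_def power2_eq_square sum_product by (simp add: indicator_inter_arith)
  have intAA: "integrable M (indicator (A e \<inter> A e') :: _ \<Rightarrow> real)" if "e \<in> PP" "e' \<in> PP" for e e'
    using Ae[OF that(1)] Ae[OF that(2)] by (intro integrable_real_indicator) (auto simp: less_top[symmetric])
  have intX2: "integrable M (\<lambda>\<omega>. X \<omega> ^ 2)" unfolding X2 using intAA by auto
  define Sh where "Sh = {(e,e'). e \<in> PP \<and> e' \<in> PP \<and> \<not> ({fst e, snd e} \<inter> {fst e', snd e'} = {})}"
  have p0: "p \<ge> 0" by (simp add: p_def)
  have qprob: "P.prob (A (s,a) \<inter> A (s,b)) \<le> q"
    if "s < n" "a < n" "b < n" "s \<noteq> a" "s \<noteq> b" "a \<noteq> b" for s a b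
  proof -
    have eq: "A (s,a) \<inter> A (s,b) = {\<omega>\<in>space M. (\<omega> s, \<omega> a) \<in> R \<and> (\<omega> s, \<omega> b) \<in> R}"
      by (auto simp: A_def)
    have "emeasure M {\<omega>\<in>space M. (\<omega> s, \<omega> a) \<in> R \<and> (\<omega> s, \<omega> b) \<in> R} \<le> ennreal q"
      using share_prob[OF N sN _ _ _ _ _ _ R, of s "{..<n}" a b] that qe by (simp add: M_def)
    then show ?thesis unfolding eq using q0 by (simp add: P.emeasure_eq_measure)
  qed
  have symR: "(x,y)\<in>R \<Longrightarrow> (y,x)\<in>R" for x y using sym by blast
  have Aeq: "A (x,y) = A (y,x)" for x y
    unfolding A_def by (auto intro: symR)
  have trm: "P.prob (A e \<inter> A e') \<le> (if e = e' then p else 0) + p^2 + (if (e,e') \<in> Sh \<and> e \<noteq> e' then q else 0)"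
    if e: "e \<in> PP" "e' \<in> PP" for e e'
  proof -
    obtain i j k l where ij: "e = (i,j)" "e' = (k,l)" "i<j" "j<n" "k<l" "l<n"
      using e by (auto simp: PP_def)
    show ?thesis
    proof (cases "e = e'")
      case True then show ?thesis using pA[OF e(1)] p0 by simp
    next
      case False
      show ?thesis
      proof (cases "(e,e') \<in> Sh")
        case sh: True
        then have "i = k \<or> i = l \<or> j = k \<or> j = l" using ij by (auto simp: Sh_def)
        then have "P.prob (A e \<inter> A e') \<le> q"
        proof (elim disjE)
          assume h: "i = k"
          then have "j \<noteq> l" using False ij by auto
          then show ?thesis using qprob[of i j l] ij h by simp
        next
          assume h: "i = l"
          then have "A e \<inter> A e' = A (i,j) \<inter> A (i,k)" using ij Aeq by simp
          then show ?thesis using qprob[of i j k] ij h by simp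
        next
          assume h: "j = k"
          then have "A e \<inter> A e' = A (j,i) \<inter> A (j,l)" using ij Aeq by simp
          then show ?thesis using qprob[of j i l] ij h by simp
        next
          assume h: "j = l"
          then have "i \<noteq> k" using False ij by auto
          have "A e \<inter> A e' = A (j,i) \<inter> A (j,k)" using ij Aeq h by simp
          then show ?thesis using qprob[of j i k] ij h \<open>i \<noteq> k\<close> by simp
        qed
        then have "P.prob (A e \<inter> A e') \<le> p^2 + q" by (smt (verit) zero_le_power2)
        then show ?thesis using False sh by simp
      next
        case nsh: False
        then have dj: "{i,j} \<inter> {k,l} = {}" using ij e by (auto simp: Sh_def)
        have eq: "A e \<inter> A e' = {\<omega>\<in>space M. (\<omega> i, \<omega> j) \<in> R \<and> (\<omega> k, \<omega> l) \<in> R}" using ij by (auto simp: A_def)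
        have "P.prob {\<omega>\<in>space M. (\<omega> i, \<omega> j) \<in> R \<and> (\<omega> k, \<omega> l) \<in> R} = P.prob (A e) * P.prob (A e')"
          using disj_prob[OF N _ _ _ _ dj R, of "{..<n}"] ij unfolding A_def M_def by simp
        then have "P.prob (A e \<inter> A e') = p * p" using eq pA e by simp
        then show ?thesis using False nsh by (simp add: power2_eq_square)
      qed
    qed
  qed
  have EX2: "P.expectation (\<lambda>\<omega>. X \<omega> ^ 2) = (\<Sum>e\<in>PP. \<Sum>e'\<in>PP. P.prob (A e \<inter> A e'))"
  proof -
    have AAs: "A e \<inter> A e' \<inter> space M = A e \<inter> A e'" for e e' by (auto simp: A_def)
    show ?thesis unfolding X2 using intAA
      by (simp add: Bochner_Integration.integral_sum AAs)
  qed
  have "(\<Sum>e\<in>PP. \<Sum>e'\<in>PP. P.prob (A e \<inter> A e')) \<le>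
        (\<Sum>e\<in>PP. \<Sum>e'\<in>PP. (if e = e' then p else 0) + p^2 + (if (e,e') \<in> Sh \<and> e \<noteq> e' then q else 0))"
    using trm by (intro sum_mono) auto
  also have "\<dots> = m * p + m^2 * p^2 + (\<Sum>e\<in>PP. \<Sum>e'\<in>PP. (if (e,e') \<in> Sh \<and> e \<noteq> e' then q else 0))"
    using finPP by (simp add: sum.distrib m_def power2_eq_square algebra_simps)
  also have "(\<Sum>e\<in>PP. \<Sum>e'\<in>PP. (if (e,e') \<in> Sh \<and> e \<noteq> e' then q else 0)) \<le> 4 * real n ^ 3 * q"
  proof -
    have "(\<Sum>e\<in>PP. \<Sum>e'\<in>PP. (if (e,e') \<in> Sh \<and> e \<noteq> e' then q else 0)) \<le> (\<Sum>e\<in>PP. \<Sum>e'\<in>PP. (if (e,e') \<in> Sh then q else 0))"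
      using q0 by (intro sum_mono) auto
    also have "\<dots> = (\<Sum>x\<in>PP\<times>PP. (if x \<in> Sh then q else 0))"
      by (simp add: sum.cartesian_product)
    also have "\<dots> = (\<Sum>x\<in>{x\<in>PP\<times>PP. x \<in> Sh}. q)"
      using finPP by (intro sum.inter_filter[symmetric]) auto
    also have "\<dots> = (\<Sum>x\<in>Sh. q)"
    proof -
      have E: "{x\<in>PP\<times>PP. x \<in> Sh} = Sh" unfolding Sh_def by blast
      show ?thesis by (simp only: E)
    qed
    also have "\<dots> = real (card Sh) * q" by simp
    also have "\<dots> \<le> real (4 * n^3) * q"
    proof -
      have sc: "card Sh \<le> 4*n^3" using share_card[of n] unfolding Sh_def PP_def .
      have "real (card Sh) \<le> real (4*n^3)" using sc by (simp only: of_nat_le_iff)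
      then show ?thesis using q0 by (intro mult_right_mono) simp_all
    qed
    finally show ?thesis by simp
  qed
  finally have EX2le: "P.expectation (\<lambda>\<omega>. X \<omega> ^ 2) \<le> m * p + m^2 * p^2 + 4 * real n ^ 3 * q"
    using EX2 by simp
  have var: "P.variance X \<le> m * p + 4 * real n ^ 3 * q"
    using P.variance_eq[OF intX intX2] EX2le EX by (simp add: power_mult_distrib)
  have mp: "m * p > 0" using m1 ppos by (simp add: p_def)
  have cheb: "P.prob {\<omega>\<in>space M. \<bar>X \<omega> - P.expectation X\<bar> \<ge> m * p / 2} \<le> P.variance X / (m * p / 2)^2"
    using mp by (intro P.Chebyshev_inequality intX2) auto
  have good: "{\<omega>\<in>space M. \<not> \<bar>X \<omega> - m * p\<bar> \<ge> m * p / 2} \<subseteq>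
     {\<omega>\<in>space M. lo \<le> real (card {(i,j). i<j \<and> j<n \<and> (\<omega> i, \<omega> j)\<in>R}) \<and> real (card {(i,j). i<j \<and> j<n \<and> (\<omega> i, \<omega> j)\<in>R}) \<le> hi}"
  proof -
    have ab': "lo \<le> m * p / 2" "3 * m * p / 2 \<le> hi" using ab by (simp_all add: m_def p_def PP_def)
    have "lo \<le> X \<omega> \<and> X \<omega> \<le> hi" if "\<not> \<bar>X \<omega> - m * p\<bar> \<ge> m * p / 2" for \<omega>
      using that ab' by (auto simp: abs_if split: if_splits)
    then show ?thesis using Xeq by auto
  qed
  have tgt: "{\<omega>\<in>space M. lo \<le> real (card {(i,j). i<j \<and> j<n \<and> (\<omega> i, \<omega> j)\<in>R}) \<and> real (card {(i,j). i<j \<and> j<n \<and> (\<omega> i, \<omega> j)\<in>R}) \<le> hi}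
       = {\<omega>\<in>space M. lo \<le> X \<omega> \<and> X \<omega> \<le> hi}" using Xeq by auto
  define bad where "bad = {\<omega>\<in>space M. \<bar>X \<omega> - m * p\<bar> \<ge> m * p / 2}"
  have badm: "bad \<in> P.events" unfolding bad_def by measurable
  have vb: "P.variance X / (m*p/2)^2 \<le> 4 * (m * p + 4 * real n ^ 3 * q) / (m * p)^2"
  proof -
    have "P.variance X / (m*p/2)^2 = 4 * P.variance X / (m*p)^2"
      using mp by (simp add: power_divide field_simps)
    also have "\<dots> \<le> 4 * (m * p + 4 * real n ^ 3 * q) / (m * p)^2"
      using var by (intro divide_right_mono mult_left_mono) auto
    finally show ?thesis .
  qed
  have "1 - 4 * (m * p + 4 * real n ^ 3 * q) / (m * p)^2 \<le> 1 - P.prob bad"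
    using cheb vb EX unfolding bad_def by simp
  also have "1 - P.prob bad = P.prob (space M - bad)"
    using badm by (simp add: P.prob_compl)
  also have "space M - bad = {\<omega>\<in>space M. \<not> \<bar>X \<omega> - m * p\<bar> \<ge> m * p / 2}"
    unfolding bad_def by blast
  also have "P.prob \<dots> \<le> P.prob {\<omega>\<in>space M. lo \<le> real (card {(i,j). i<j \<and> j<n \<and> (\<omega> i, \<omega> j)\<in>R}) \<and> real (card {(i,j). i<j \<and> j<n \<and> (\<omega> i, \<omega> j)\<in>R}) \<le> hi}"
    using good unfolding tgt by (intro P.finite_measure_mono) auto
  finally show ?thesis by (simp add: M_def m_def p_def PP_def)
qed


lemma one_nth[simp]: "(One :: real^'d) $ i = 1"
  by (simp add: cart_eq_inner_axis axis_in_Basis_iff)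

lemma one_nth2[simp]: "(\<Sum>x\<in>(Basis::(real^'d) set). x $ i) = 1"
  using one_nth[of i] by simp

lemma box_vol:
  fixes a :: "real^'d" assumes r: "r \<ge> 0"
  shows "emeasure lborel (cbox (a - r *\<^sub>R One) (a + r *\<^sub>R One)) = ennreal ((2*r) ^ CARD('d))"
proof -
  have "\<forall>b\<in>Basis. (a - r *\<^sub>R One) \<bullet> b \<le> (a + r *\<^sub>R One) \<bullet> b" using r by (auto simp: inner_diff_left inner_add_left)
  then have "emeasure lborel (cbox (a - r *\<^sub>R One) (a + r *\<^sub>R One)) = (\<Prod>b\<in>(Basis::(real^'d) set). ((a + r *\<^sub>R One) - (a - r *\<^sub>R One)) \<bullet> b)"
    by (simp add: emeasure_lborel_cbox_eq)
  also have "(\<Prod>b\<in>(Basis::(real^'d) set). ((a + r *\<^sub>R One) - (a - r *\<^sub>R One)) \<bullet> b) = (\<Prod>b\<in>(Basis::(real^'d) set). 2 * r)"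
  proof -
    have e: "(a + r *\<^sub>R One) - (a - r *\<^sub>R One) = (2*r) *\<^sub>R (One::real^'d)" by (simp add: vec_eq_iff)
    show ?thesis unfolding e by (intro prod.cong) (auto simp: inner_sum_Basis)
  qed
  also have "\<dots> = (2*r) ^ CARD('d)" by simp
  finally show ?thesis by simp
qed

lemma box_vol2:
  fixes a :: "real^'d" assumes t: "t \<ge> 0"
  shows "emeasure lborel (cbox a (a + t *\<^sub>R One)) = ennreal (t ^ CARD('d))"
proof -
  have "\<forall>b\<in>Basis. a \<bullet> b \<le> (a + t *\<^sub>R One) \<bullet> b" using t by (auto simp: inner_add_left)
  then have "emeasure lborel (cbox a (a + t *\<^sub>R One)) = (\<Prod>b\<in>(Basis::(real^'d) set). ((a + t *\<^sub>R One) - a) \<bullet> b)"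
    by (simp add: emeasure_lborel_cbox_eq)
  also have "(\<Prod>b\<in>(Basis::(real^'d) set). ((a + t *\<^sub>R One) - a) \<bullet> b) = (\<Prod>b\<in>(Basis::(real^'d) set). t)"
  proof -
    have e: "(a + t *\<^sub>R One) - a = t *\<^sub>R (One::real^'d)" by (simp add: vec_eq_iff)
    show ?thesis unfolding e by (intro prod.cong) (auto simp: inner_sum_Basis)
  qed
  also have "\<dots> = t ^ CARD('d)" by simp
  finally show ?thesis by simp
qed

definition shifts :: "(real^'d) set" where
  "shifts = {s. \<forall>i. s$i \<in> {-1,0,1}}"

lemma finite_shifts: "finite (shifts :: (real^'d::finite) set)"
proof -
  have "shifts \<subseteq> vec_lambda ` (PiE UNIV (\<lambda>_::'d. {-1,0,1::real}))"
  proof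
    fix s :: "real^'d" assume "s \<in> shifts"
    then have "(\<lambda>i. s$i) \<in> PiE UNIV (\<lambda>_. {-1,0,1})" by (auto simp: shifts_def)
    moreover have "s = vec_lambda (\<lambda>i. s$i)" by simp
    ultimately show "s \<in> vec_lambda ` (PiE UNIV (\<lambda>_::'d. {-1,0,1::real}))" by blast
  qed
  moreover have "finite (PiE UNIV (\<lambda>_::'d. {-1,0,1::real}))" by (intro finite_PiE) auto
  ultimately show ?thesis using finite_subset by blast
qed

lemma toric_coord_le:
  fixes x y :: "real^'d"
  shows "min \<bar>x$i - y$i\<bar> (1 - \<bar>x$i - y$i\<bar>) \<le> toric_dist x y \<or> min \<bar>x$i - y$i\<bar> (1 - \<bar>x$i - y$i\<bar>) < 0"
proof (cases "min \<bar>x$i - y$i\<bar> (1 - \<bar>x$i - y$i\<bar>) < 0")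
  case False
  let ?t = "\<lambda>i. min \<bar>x$i - y$i\<bar> (1 - \<bar>x$i - y$i\<bar>)"
  have "(?t i)^2 \<le> (\<Sum>j\<in>UNIV. (?t j)^2)"
    by (intro member_le_sum) auto
  then have "sqrt ((?t i)^2) \<le> toric_dist x y" unfolding toric_dist_def by (rule real_sqrt_le_mono)
  then show ?thesis using False by simp
qed simp

lemma toric_cover:
  fixes x y :: "real^'d"
  assumes x: "x \<in> cbox 0 One" and y: "y \<in> cbox 0 One" and d: "toric_dist x y \<le> r"
  shows "\<exists>s\<in>shifts. y \<in> cbox (x + s - r *\<^sub>R One) (x + s + r *\<^sub>R One)"
proof -
  define s :: "real^'d" where "s = (\<chi> i. if \<bar>x$i - y$i\<bar> \<le> r then 0 else if y$i > x$i then 1 else -1)"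
  have xi: "0 \<le> x$i" "x$i \<le> 1" and yi: "0 \<le> y$i" "y$i \<le> 1" for i
    using x y by (auto simp: mem_box_cart)
  have ti: "min \<bar>x$i - y$i\<bar> (1 - \<bar>x$i - y$i\<bar>) \<le> r" for i
  proof -
    have "\<bar>x$i - y$i\<bar> \<le> 1" using xi[of i] yi[of i] by auto
    then have "\<not> min \<bar>x$i - y$i\<bar> (1 - \<bar>x$i - y$i\<bar>) < 0" by auto
    then show ?thesis using toric_coord_le[of x i y] d by auto
  qed
  have "s \<in> shifts" by (auto simp: shifts_def s_def)
  moreover have "y \<in> cbox (x + s - r *\<^sub>R One) (x + s + r *\<^sub>R One)"
    unfolding mem_box_cart
  proof
    fix i
    show "(x + s - r *\<^sub>R One) $ i \<le> y $ i \<and> y $ i \<le> (x + s + r *\<^sub>R One) $ i"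
      using ti[of i] xi[of i] yi[of i] by (auto simp: s_def abs_if split: if_splits)
  qed
  ultimately show ?thesis by blast
qed


definition cubeU :: "(real^'d::finite) measure" where
  "cubeU = uniform_measure lborel (cbox 0 One)"

definition wD :: "(real \<Rightarrow> real) \<Rightarrow> real measure" where
  "wD f = density lborel (\<lambda>x. ennreal (f x))"

lemma node_measure_eq: "node_measure f = (cubeU :: (real^'d::finite) measure) \<Otimes>\<^sub>M wD f"
  by (simp add: node_measure_def cubeU_def wD_def)

lemma cube_vol: "emeasure lborel (cbox 0 (One :: real^'d::finite)) = 1"
  using box_vol2[of 1 "0::real^'d"] by simp

lemma prob_cubeU: "prob_space (cubeU :: (real^'d::finite) measure)"
  unfolding cubeU_def by (intro prob_space_uniform_measure) (simp_all add: cube_vol)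

lemma sets_cubeU[measurable_cong]: "sets (cubeU :: (real^'d::finite) measure) = sets borel"
  by (simp add: cubeU_def)

lemma space_cubeU[simp]: "space (cubeU :: (real^'d::finite) measure) = UNIV"
  by (simp add: cubeU_def)

lemma emeasure_cubeU: "S \<in> sets borel \<Longrightarrow> emeasure (cubeU :: (real^'d::finite) measure) S = emeasure lborel (cbox 0 One \<inter> S)"
  by (simp add: cubeU_def cube_vol divide_ennreal_def)

lemma AE_cubeU: "AE x in (cubeU :: (real^'d::finite) measure). x \<in> cbox 0 One"
  unfolding cubeU_def by (intro AE_uniform_measureI) auto

lemma sets_wD[measurable_cong]: "sets (wD f) = sets borel"
  by (simp add: wD_def)

lemma space_wD[simp]: "space (wD f) = UNIV"
  by (simp add: wD_def)

locale wdist =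
  fixes f :: "real \<Rightarrow> real"
  assumes f_nonneg: "\<And>x. f x \<ge> 0"
    and f_supp: "\<And>x. x < 0 \<Longrightarrow> f x = 0"
    and f_int: "integrable lborel f"
    and f_total: "integral\<^sup>L lborel f = 1"
    and f_mean: "integrable lborel (\<lambda>x. x * f x)"
    and f_var: "integrable lborel (\<lambda>x. x\<^sup>2 * f x)"
begin

lemma f_meas[measurable]: "f \<in> borel_measurable borel"
  using f_int by (simp add: borel_measurable_integrable)

lemma prob_wD: "prob_space (wD f)"
proof (rule prob_spaceI)
  have "emeasure (wD f) UNIV = (\<integral>\<^sup>+x. ennreal (f x) \<partial>lborel)"
    by (simp add: wD_def emeasure_density)
  also have "\<dots> = ennreal (integral\<^sup>L lborel f)"
    using f_int f_nonneg by (intro nn_integral_eq_integral) auto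
  finally show "emeasure (wD f) (space (wD f)) = 1" using f_total by simp
qed

lemma AE_wD_pos: "AE w in wD f. w > 0"
proof -
  have "AE x in lborel. x \<noteq> (0::real)" by (rule AE_lborel_singleton)
  then have "AE x in lborel. 0 < ennreal (f x) \<longrightarrow> x > 0"
  proof (rule AE_mp, intro AE_I2 impI)
    fix x :: real assume "x \<noteq> 0" "0 < ennreal (f x)"
    then show "x > 0" using f_supp[of x] by (cases "x < 0") auto
  qed
  then show ?thesis unfolding wD_def by (subst AE_density) auto
qed

lemma integrable_wD: "h \<in> borel_measurable borel \<Longrightarrow> integrable lborel (\<lambda>x. f x *\<^sub>R h x) \<Longrightarrow> integrable (wD f) h"
  for h :: "real \<Rightarrow> real"
  unfolding wD_def using f_nonneg by (subst integrable_density) auto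

lemma int_abs: "integrable (wD f) (\<lambda>w. \<bar>w\<bar>)"
proof (rule integrable_wD)
  show "(\<lambda>w::real. \<bar>w\<bar>) \<in> borel_measurable borel"
    using borel_measurable_abs[OF measurable_ident_sets[OF refl]] by (simp add: id_def)
  have "integrable lborel (\<lambda>x. \<bar>x * f x\<bar>)" using f_mean by (rule integrable_abs)
  then show "integrable lborel (\<lambda>x. f x *\<^sub>R \<bar>x\<bar>)"
    using f_nonneg by (simp add: abs_mult mult.commute)
qed

lemma int_sq: "integrable (wD f) (\<lambda>w. w^2)"
  by (rule integrable_wD) (use f_var in \<open>simp\<close>, use f_var in \<open>simp add: mult.commute\<close>)

lemma exists_w1: "\<exists>w1>0. measure (wD f) {w1..} > 0"
proof (rule ccontr)
  interpret D: prob_space "wD f" by (rule prob_wD)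
  assume "\<not> (\<exists>w1>0. measure (wD f) {w1..} > 0)"
  then have z: "measure (wD f) {w1..} = 0" if "w1 > 0" for w1
  proof -
    have "\<not> 0 < measure (wD f) {w1..}" using \<open>\<not> _\<close> that by blast
    then show ?thesis using measure_nonneg[of "wD f" "{w1..}"] by linarith
  qed
  have "{0<..} = (\<Union>k. {1 / real (Suc k)..})"
  proof (intro equalityI subsetI)
    fix x :: real assume "x \<in> {0<..}"
    then have "\<exists>k. 1 / real (Suc k) < x"
      using reals_Archimedean by (metis greaterThan_iff inverse_eq_divide of_nat_Suc add.commute)
    then obtain k where "1 / real (Suc k) < x" by blast
    then show "x \<in> (\<Union>k. {1 / real (Suc k)..})" by (intro UN_I[of k]) auto
  next
    fix x :: real assume "x \<in> (\<Union>k. {1 / real (Suc k)..})"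
    then obtain k where "1 / real (Suc k) \<le> x" by auto
    moreover have "0 < 1 / real (Suc k)" by simp
    ultimately have "0 < x" by linarith
    then show "x \<in> {0<..}" by simp
  qed
  moreover have "(\<Union>k. {1 / real (Suc k)..}) \<in> null_sets (wD f)"
    using z by (intro null_sets_UN) (auto simp: D.emeasure_eq_measure)
  ultimately have "{0<..} \<in> null_sets (wD f)" by simp
  then have "AE w in wD f. w \<notin> {0<..}" by (rule AE_not_in)
  with AE_wD_pos have "AE w in wD f. False" by eventually_elim auto
  then show False by simp
qed

end


lemma vec_nth_meas[measurable]: "(\<lambda>x::real^'d. x $ i) \<in> borel_measurable borel"
  by (intro borel_measurable_continuous_onI continuous_intros)

lemma toric_meas[measurable]: "(\<lambda>(x::real^'d, y). toric_dist x y) \<in> borel_measurable (borel \<Otimes>\<^sub>M borel)"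
  unfolding toric_dist_def by measurable

definition adjR :: "real \<Rightarrow> (((real^'d::finite) \<times> real) \<times> ((real^'d) \<times> real)) set" where
  "adjR \<theta> = {(u,v). \<theta> \<le> (snd u + snd v) / toric_dist (fst u) (fst v) ^ CARD('d)}"

lemma sets_node_measure[measurable_cong]: "sets (node_measure f :: ((real^'d::finite) \<times> real) measure) = sets (borel \<Otimes>\<^sub>M borel)"
  unfolding node_measure_def by (intro sets_pair_measure_cong) auto

lemma space_node_measure[simp]: "space (node_measure f :: ((real^'d::finite) \<times> real) measure) = UNIV"
  unfolding node_measure_def by (simp add: space_pair_measure)

lemma adjR_sets: "(adjR \<theta> :: (((real^'d::finite) \<times> real) \<times> _) set) \<in> sets (node_measure f \<Otimes>\<^sub>M node_measure f)"
proof -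
  have *: "(\<lambda>(u,v). (snd u + snd v) / toric_dist (fst u) (fst v) ^ CARD('d)) \<in> borel_measurable ((node_measure f :: ((real^'d) \<times> real) measure) \<Otimes>\<^sub>M node_measure f)"
    by measurable
  have "adjR \<theta> = {x \<in> space ((node_measure f :: ((real^'d) \<times> real) measure) \<Otimes>\<^sub>M node_measure f). \<theta> \<le> (\<lambda>(u,v). (snd u + snd v) / toric_dist (fst u) (fst v) ^ CARD('d)) x}"
    by (auto simp: adjR_def space_pair_measure)
  also have "\<dots> \<in> sets ((node_measure f :: ((real^'d) \<times> real) measure) \<Otimes>\<^sub>M node_measure f)"
    using * by measurable
  finally show ?thesis .
qed

lemma toric_dist_sym: "toric_dist x y = toric_dist y x"
  unfolding toric_dist_def by (simp add: abs_minus_commute)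

lemma toric_dist_nonneg: "toric_dist x y \<ge> 0"
  unfolding toric_dist_def by (simp add: sum_nonneg)

lemma adjR_sym: "(u,v) \<in> adjR \<theta> \<longleftrightarrow> (v,u) \<in> adjR \<theta>"
  by (simp add: adjR_def toric_dist_sym add.commute)

lemma adj_imp_dist:
  assumes th: "\<theta> > 0" and a: "((x,w0),(y,w)) \<in> (adjR \<theta> :: (((real^'d::finite) \<times> real) \<times> _) set)"
  shows "toric_dist x y \<le> root CARD('d) (max 0 (w0 + w) / \<theta>)" "toric_dist x y > 0" "w0 + w > 0"
proof -
  let ?T = "toric_dist x y" and ?d = "CARD('d)"
  have d: "?d > 0" by simp
  have q: "\<theta> \<le> (w0 + w) / ?T ^ ?d" using a by (simp add: adjR_def)
  have T0: "?T \<ge> 0" by (rule toric_dist_nonneg)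
  have Tp: "?T ^ ?d > 0"
  proof (rule ccontr)
    assume "\<not> ?T ^ ?d > 0" then have "?T ^ ?d = 0" using zero_le_power[OF T0, of ?d] by linarith
    then show False using q th by (simp add: zero_power[OF d])
  qed
  then show "?T > 0" using T0 by (metis le_less power_0_left zero_less_power_eq less_irrefl d neq0_conv)
  have "\<theta> * ?T ^ ?d \<le> w0 + w" using q Tp by (simp add: le_divide_eq)
  then have wp: "w0 + w \<ge> \<theta> * ?T ^ ?d" .
  then show "w0 + w > 0" using th Tp by (smt (verit) mult_pos_pos)
  have "?T ^ ?d \<le> max 0 (w0 + w) / \<theta>" using wp th by (simp add: le_divide_eq mult.commute)
  then have "root ?d (?T ^ ?d) \<le> root ?d (max 0 (w0 + w) / \<theta>)" by (subst real_root_le_iff[OF d])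
  moreover have "root ?d (?T ^ ?d) = ?T" by (rule real_root_power_cancel[OF d T0])
  ultimately show "?T \<le> root ?d (max 0 (w0 + w) / \<theta>)" by simp
qed

definition Cs :: "'d::finite itself \<Rightarrow> real" where
  "Cs _ = real (card (shifts :: (real^'d) set)) * 2 ^ CARD('d)"

lemma toric_meas1[measurable]: "(\<lambda>y::real^'d. toric_dist x y) \<in> borel_measurable borel"
  unfolding toric_dist_def by measurable

lemma sec_sets: "{y. ((x,w0),(y,w)) \<in> (adjR \<theta> :: (((real^'d::finite) \<times> real) \<times> _) set)} \<in> sets borel"
proof -
  have "{y. ((x,w0),(y,w)) \<in> (adjR \<theta> :: (((real^'d) \<times> real) \<times> _) set)} = {y \<in> space borel. \<theta> \<le> (w0 + w) / toric_dist x y ^ CARD('d)}"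
    by (simp add: adjR_def)
  also have "\<dots> \<in> sets borel" by measurable
  finally show ?thesis .
qed

lemma sec_up:
  assumes th: "\<theta> > 0" and x: "x \<in> cbox 0 (One :: real^'d::finite)"
  shows "emeasure (cubeU :: (real^'d) measure) {y. ((x,w0),(y,w)) \<in> adjR \<theta>} \<le> ennreal (Cs TYPE('d) * (max 0 (w0 + w) / \<theta>))"
proof -
  let ?d = "CARD('d)"
  define r where "r = root ?d (max 0 (w0 + w) / \<theta>)"
  have r0: "r \<ge> 0" unfolding r_def using th by simp
  define S where "S = {y. ((x,w0),(y,w)) \<in> (adjR \<theta> :: (((real^'d) \<times> real) \<times> _) set)}"
  have Ssets: "S \<in> sets borel" unfolding S_def by (rule sec_sets)
  define B where "B s = cbox (x + s - r *\<^sub>R One) (x + s + r *\<^sub>R One)" for s :: "real^'d"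
  have cover: "cbox 0 One \<inter> S \<subseteq> (\<Union>s\<in>shifts. B s)"
  proof
    fix y assume y: "y \<in> cbox 0 One \<inter> S"
    then have "toric_dist x y \<le> r" using adj_imp_dist(1)[OF th] by (auto simp: S_def r_def)
    then show "y \<in> (\<Union>s\<in>shifts. B s)" using toric_cover[OF x _ ] y by (auto simp: B_def)
  qed
  have "emeasure (cubeU :: (real^'d) measure) S = emeasure lborel (cbox 0 One \<inter> S)"
    using Ssets by (rule emeasure_cubeU)
  also have "\<dots> \<le> emeasure lborel (\<Union>s\<in>shifts. B s)"
  proof -
    have Bs: "(\<Union>s\<in>shifts. B s) \<in> sets borel" by (intro sets.finite_UN finite_shifts) (auto simp: B_def)
    show ?thesis using cover Bs by (intro emeasure_mono) auto
  qed
  also have "\<dots> \<le> (\<Sum>s\<in>shifts. emeasure lborel (B s))"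
    by (intro emeasure_subadditive_finite finite_shifts) (auto simp: B_def)
  also have "\<dots> = (\<Sum>s\<in>(shifts :: (real^'d) set). ennreal ((2*r) ^ ?d))"
  proof (rule sum.cong[OF refl])
    fix s :: "real^'d"
    show "emeasure lborel (B s) = ennreal ((2*r) ^ ?d)" unfolding B_def using box_vol[OF r0, of "x+s"] by simp
  qed
  also have "\<dots> = ennreal (real (card (shifts :: (real^'d) set)) * (2*r) ^ ?d)"
    using r0 by (simp add: ennreal_of_nat_eq_real_of_nat ennreal_mult)
  also have "real (card (shifts :: (real^'d) set)) * (2*r) ^ ?d = Cs TYPE('d) * (max 0 (w0 + w) / \<theta>)"
  proof -
    have "r ^ ?d = max 0 (w0 + w) / \<theta>" unfolding r_def using th by (intro real_root_pow_pos2) auto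
    then show ?thesis by (simp add: Cs_def power_mult_distrib)
  qed
  finally show ?thesis by (simp add: S_def)
qed


lemma Cs_nonneg: "Cs TYPE('d::finite) \<ge> 0" by (simp add: Cs_def)

context wdist begin

definition mu :: real where "mu = integral\<^sup>L (wD f) (\<lambda>w. \<bar>w\<bar>)"
definition Q0 :: real where "Q0 = integral\<^sup>L (wD f) (\<lambda>w. (\<bar>w\<bar> + mu)^2)"

lemma mu_nonneg: "mu \<ge> 0" unfolding mu_def by simp

lemma int_sq2: "integrable (wD f) (\<lambda>w. (\<bar>w\<bar> + mu)^2)"
proof -
  interpret D: prob_space "wD f" by (rule prob_wD)
  have e: "(\<lambda>w. (\<bar>w\<bar> + mu)^2) = (\<lambda>w. w^2 + (2*mu) * \<bar>w\<bar> + mu^2)"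
    by (auto simp: power2_eq_square algebra_simps)
  show ?thesis unfolding e using int_sq int_abs by auto
qed

lemma lin_nn:
  assumes a: "a \<ge> 0" and b: "b \<ge> 0"
  shows "(\<integral>\<^sup>+w. ennreal (a + b * \<bar>w\<bar>) \<partial>wD f) = ennreal (a + b * mu)"
proof -
  interpret D: prob_space "wD f" by (rule prob_wD)
  have i: "integrable (wD f) (\<lambda>w. a + b * \<bar>w\<bar>)" using int_abs by auto
  have "(\<integral>\<^sup>+w. ennreal (a + b * \<bar>w\<bar>) \<partial>wD f) = ennreal (integral\<^sup>L (wD f) (\<lambda>w. a + b * \<bar>w\<bar>))"
    using a b i by (intro nn_integral_eq_integral) auto
  also have "integral\<^sup>L (wD f) (\<lambda>w. a + b * \<bar>w\<bar>) = a + b * mu"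
    using int_abs D.prob_space by (simp add: mu_def)
  finally show ?thesis .
qed

lemma snd_nn:
  assumes h[measurable]: "h \<in> borel_measurable borel"
  shows "(\<integral>\<^sup>+u. h (snd u) \<partial>((cubeU :: (real^'d::finite) measure) \<Otimes>\<^sub>M wD f)) = (\<integral>\<^sup>+w. h w \<partial>wD f)"
proof -
  interpret U: prob_space "cubeU :: (real^'d) measure" by (rule prob_cubeU)
  interpret D: prob_space "wD f" by (rule prob_wD)
  interpret UD: pair_prob_space "cubeU :: (real^'d) measure" "wD f" ..
  have "(\<integral>\<^sup>+u. h (snd u) \<partial>((cubeU :: (real^'d) measure) \<Otimes>\<^sub>M wD f)) = (\<integral>\<^sup>+w. (\<integral>\<^sup>+x. h (snd (x, w)) \<partial>(cubeU :: (real^'d) measure)) \<partial>wD f)"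
    by (rule UD.nn_integral_snd[symmetric]) measurable
  also have "\<dots> = (\<integral>\<^sup>+w. h w \<partial>wD f)"
    using U.emeasure_space_1 by simp
  finally show ?thesis .
qed

lemma AE_cube_N: "AE u in ((cubeU :: (real^'d::finite) measure) \<Otimes>\<^sub>M wD f). fst u \<in> cbox 0 One"
proof -
  interpret U: prob_space "cubeU :: (real^'d) measure" by (rule prob_cubeU)
  interpret D: prob_space "wD f" by (rule prob_wD)
  interpret UD: pair_prob_space "cubeU :: (real^'d) measure" "wD f" ..
  show ?thesis
    by (rule UD.AE_pair_measure) (auto intro!: AE_I2 simp: AE_cubeU[THEN AE_mp])
qed

end


context wdist begin

lemma sec_pair_sets:
  "Pair (u :: (real^'d::finite) \<times> real) -` adjR \<theta> \<in> sets ((cubeU :: (real^'d) measure) \<Otimes>\<^sub>M wD f)"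
proof -
  have "Pair u -` adjR \<theta> \<in> sets (node_measure f :: ((real^'d) \<times> real) measure)"
    by (rule sets_Pair1[OF adjR_sets])
  then show ?thesis by (simp add: node_measure_eq)
qed

lemma g_up:
  assumes th: "\<theta> > 0" and x: "x \<in> cbox 0 (One :: real^'d::finite)"
  shows "emeasure ((cubeU :: (real^'d) measure) \<Otimes>\<^sub>M wD f) (Pair (x,w0) -` adjR \<theta>)
           \<le> ennreal (Cs TYPE('d) / \<theta> * \<bar>w0\<bar> + Cs TYPE('d) / \<theta> * mu)"
proof -
  interpret U: prob_space "cubeU :: (real^'d) measure" by (rule prob_cubeU)
  interpret D: prob_space "wD f" by (rule prob_wD)
  interpret UD: pair_prob_space "cubeU :: (real^'d) measure" "wD f" ..
  let ?C = "Cs TYPE('d)"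
  have C0: "?C \<ge> 0" by (rule Cs_nonneg)
  have "emeasure ((cubeU :: (real^'d) measure) \<Otimes>\<^sub>M wD f) (Pair (x,w0) -` adjR \<theta>)
      = (\<integral>\<^sup>+w. emeasure (cubeU :: (real^'d) measure) ((\<lambda>y. (y, w)) -` (Pair (x,w0) -` adjR \<theta>)) \<partial>wD f)"
    by (rule UD.emeasure_pair_measure_alt2[OF sec_pair_sets])
  also have "\<dots> \<le> (\<integral>\<^sup>+w. ennreal (?C / \<theta> * \<bar>w0\<bar> + ?C / \<theta> * \<bar>w\<bar>) \<partial>wD f)"
  proof (rule nn_integral_mono)
    fix w
    have "emeasure (cubeU :: (real^'d) measure) ((\<lambda>y. (y, w)) -` (Pair (x,w0) -` adjR \<theta>))
        = emeasure (cubeU :: (real^'d) measure) {y. ((x,w0),(y,w)) \<in> adjR \<theta>}" by (simp add: vimage_def)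
    also have "\<dots> \<le> ennreal (?C * (max 0 (w0 + w) / \<theta>))" by (rule sec_up[OF th x])
    also have "\<dots> \<le> ennreal (?C / \<theta> * \<bar>w0\<bar> + ?C / \<theta> * \<bar>w\<bar>)"
    proof (rule ennreal_leI)
      have "max 0 (w0 + w) / \<theta> \<le> (\<bar>w0\<bar> + \<bar>w\<bar>) / \<theta>" using th by (intro divide_right_mono) auto
      then have "?C * (max 0 (w0 + w) / \<theta>) \<le> ?C * ((\<bar>w0\<bar> + \<bar>w\<bar>) / \<theta>)" using C0 by (rule mult_left_mono)
      moreover have "?C / \<theta> * \<bar>w0\<bar> + ?C / \<theta> * \<bar>w\<bar> = ?C * ((\<bar>w0\<bar> + \<bar>w\<bar>) / \<theta>)"
        using th by (simp add: field_simps)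
      ultimately show "?C * (max 0 (w0 + w) / \<theta>) \<le> ?C / \<theta> * \<bar>w0\<bar> + ?C / \<theta> * \<bar>w\<bar>" by linarith
    qed
    finally show "emeasure (cubeU :: (real^'d) measure) ((\<lambda>y. (y, w)) -` (Pair (x,w0) -` adjR \<theta>)) \<le> ennreal (?C / \<theta> * \<bar>w0\<bar> + ?C / \<theta> * \<bar>w\<bar>)" .
  qed
  also have "\<dots> = ennreal (?C / \<theta> * \<bar>w0\<bar> + ?C / \<theta> * mu)"
    using C0 th by (intro lin_nn) auto
  finally show ?thesis .
qed

lemma g_meas[measurable]:
  "(\<lambda>u. emeasure ((cubeU :: (real^'d::finite) measure) \<Otimes>\<^sub>M wD f) (Pair u -` adjR \<theta>)) \<in> borel_measurable ((cubeU :: (real^'d) measure) \<Otimes>\<^sub>M wD f)"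
proof -
  interpret U: prob_space "cubeU :: (real^'d) measure" by (rule prob_cubeU)
  interpret D: prob_space "wD f" by (rule prob_wD)
  interpret UD: pair_prob_space "cubeU :: (real^'d) measure" "wD f" ..
  have "adjR \<theta> \<in> sets (((cubeU :: (real^'d) measure) \<Otimes>\<^sub>M wD f) \<Otimes>\<^sub>M ((cubeU :: (real^'d) measure) \<Otimes>\<^sub>M wD f))"
    using adjR_sets[of \<theta> f] by (simp add: node_measure_eq)
  then show ?thesis by (rule UD.P.measurable_emeasure_Pair)
qed

lemma qe_bound:
  assumes th: "\<theta> > 0"
  shows "(\<integral>\<^sup>+u. emeasure ((cubeU :: (real^'d::finite) measure) \<Otimes>\<^sub>M wD f) (Pair u -` adjR \<theta>) ^ 2 \<partial>((cubeU :: (real^'d) measure) \<Otimes>\<^sub>M wD f))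
     \<le> ennreal ((Cs TYPE('d) / \<theta>)^2 * Q0)"
proof -
  let ?C = "Cs TYPE('d)"
  let ?N = "(cubeU :: (real^'d) measure) \<Otimes>\<^sub>M wD f"
  have C0: "?C \<ge> 0" by (rule Cs_nonneg)
  have "(\<integral>\<^sup>+u. emeasure ?N (Pair u -` adjR \<theta>) ^ 2 \<partial>?N) \<le> (\<integral>\<^sup>+u. ennreal ((?C / \<theta>)^2 * (\<bar>snd u\<bar> + mu)^2) \<partial>?N)"
  proof (rule nn_integral_mono_AE)
    show "AE u in ?N. emeasure ?N (Pair u -` adjR \<theta>) ^ 2 \<le> ennreal ((?C / \<theta>)^2 * (\<bar>snd u\<bar> + mu)^2)"
      using AE_cube_N
    proof eventually_elim
      case (elim u)
      obtain x w0 where u: "u = (x, w0)" by (cases u)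
      have "emeasure ?N (Pair u -` adjR \<theta>) \<le> ennreal (?C / \<theta> * \<bar>w0\<bar> + ?C / \<theta> * mu)"
        using g_up[OF th, of x w0] elim u by simp
      then have "emeasure ?N (Pair u -` adjR \<theta>) ^ 2 \<le> ennreal (?C / \<theta> * \<bar>w0\<bar> + ?C / \<theta> * mu) ^ 2"
        by (rule power_mono) simp
      also have "\<dots> = ennreal ((?C / \<theta> * \<bar>w0\<bar> + ?C / \<theta> * mu) ^ 2)"
        using C0 th mu_nonneg by (subst ennreal_power) auto
      also have "(?C / \<theta> * \<bar>w0\<bar> + ?C / \<theta> * mu) ^ 2 = (?C / \<theta>)^2 * (\<bar>snd u\<bar> + mu)^2"
        by (simp add: u power2_eq_square algebra_simps)
      finally show ?case .
    qed
  qed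
  also have "\<dots> = (\<integral>\<^sup>+w. ennreal ((?C / \<theta>)^2 * (\<bar>w\<bar> + mu)^2) \<partial>wD f)"
    by (rule snd_nn[where h="\<lambda>w. ennreal ((?C / \<theta>)^2 * (\<bar>w\<bar> + mu)^2)"]) simp
  also have "\<dots> = ennreal (integral\<^sup>L (wD f) (\<lambda>w. (?C / \<theta>)^2 * (\<bar>w\<bar> + mu)^2))"
    using int_sq2 by (intro nn_integral_eq_integral) auto
  also have "integral\<^sup>L (wD f) (\<lambda>w. (?C / \<theta>)^2 * (\<bar>w\<bar> + mu)^2) = (?C / \<theta>)^2 * Q0"
    by (simp add: Q0_def)
  finally show ?thesis .
qed

lemma p_up:
  assumes th: "\<theta> > 0"
  shows "measure (node_measure f \<Otimes>\<^sub>M node_measure f) (adjR \<theta> :: (((real^'d::finite) \<times> real) \<times> _) set)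
     \<le> Cs TYPE('d) / \<theta> * (2 * mu)"
proof -
  let ?C = "Cs TYPE('d)"
  let ?N = "(cubeU :: (real^'d) measure) \<Otimes>\<^sub>M wD f"
  interpret U: prob_space "cubeU :: (real^'d) measure" by (rule prob_cubeU)
  interpret D: prob_space "wD f" by (rule prob_wD)
  interpret UD: pair_prob_space "cubeU :: (real^'d) measure" "wD f" ..
  have C0: "?C \<ge> 0" by (rule Cs_nonneg)
  have R: "adjR \<theta> \<in> sets (?N \<Otimes>\<^sub>M ?N)"
    using adjR_sets[of \<theta> f] by (simp add: node_measure_eq)
  have "emeasure (?N \<Otimes>\<^sub>M ?N) (adjR \<theta>) = (\<integral>\<^sup>+u. emeasure ?N (Pair u -` adjR \<theta>) \<partial>?N)"
    by (rule UD.P.emeasure_pair_measure_alt[OF R])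
  also have "\<dots> \<le> (\<integral>\<^sup>+u. ennreal (?C / \<theta> * mu + ?C / \<theta> * \<bar>snd u\<bar>) \<partial>?N)"
  proof (rule nn_integral_mono_AE)
    show "AE u in ?N. emeasure ?N (Pair u -` adjR \<theta>) \<le> ennreal (?C / \<theta> * mu + ?C / \<theta> * \<bar>snd u\<bar>)"
      using AE_cube_N
    proof eventually_elim
      case (elim u)
      obtain x w0 where u: "u = (x, w0)" by (cases u)
      show ?case using g_up[OF th, of x w0] elim u by (simp add: add.commute)
    qed
  qed
  also have "\<dots> = (\<integral>\<^sup>+w. ennreal (?C / \<theta> * mu + ?C / \<theta> * \<bar>w\<bar>) \<partial>wD f)"
    by (rule snd_nn[where h="\<lambda>w. ennreal (?C / \<theta> * mu + ?C / \<theta> * \<bar>w\<bar>)"]) simp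
  also have "\<dots> = ennreal (?C / \<theta> * mu + ?C / \<theta> * mu)"
    using C0 th mu_nonneg by (intro lin_nn) auto
  finally have "emeasure (?N \<Otimes>\<^sub>M ?N) (adjR \<theta>) \<le> ennreal (?C / \<theta> * (2 * mu))" by (simp add: algebra_simps)
  note fin = this
  interpret NN2: prob_space "?N \<Otimes>\<^sub>M ?N" by (intro prob_space_pair UD.P.prob_space_axioms)
  show ?thesis using fin C0 th mu_nonneg
    by (simp add: node_measure_eq NN2.emeasure_eq_measure)
qed

end


lemma zero_set_null:
  assumes x: "x \<in> cbox 0 (One :: real^'d::finite)"
  shows "emeasure lborel {y \<in> cbox 0 One. toric_dist x y \<le> 0} = 0"
proof -
  define B where "B s = cbox (x + s - 0 *\<^sub>R One) (x + s + 0 *\<^sub>R One)" for s :: "real^'d"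
  have "{y \<in> cbox 0 One. toric_dist x y \<le> 0} \<subseteq> (\<Union>s\<in>shifts. B s)"
  proof
    fix y assume "y \<in> {y \<in> cbox 0 One. toric_dist x y \<le> 0}"
    then have "\<exists>s\<in>shifts. y \<in> B s" using toric_cover[OF x, of y 0] unfolding B_def by blast
    then show "y \<in> (\<Union>s\<in>shifts. B s)" by blast
  qed
  moreover have Bs: "(\<Union>s\<in>shifts. B s) \<in> sets borel" by (intro sets.finite_UN finite_shifts) (auto simp: B_def)
  ultimately have "emeasure lborel {y \<in> cbox 0 One. toric_dist x y \<le> 0} \<le> emeasure lborel (\<Union>s\<in>shifts. B s)"
    by (intro emeasure_mono) auto
  also have "\<dots> \<le> (\<Sum>s\<in>shifts. emeasure lborel (B s))"
    by (intro emeasure_subadditive_finite finite_shifts) (auto simp: B_def)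
  also have "\<dots> = 0"
  proof (rule sum.neutral, rule ballI)
    fix s :: "real^'d"
    show "emeasure lborel (B s) = 0" unfolding B_def using box_vol[of 0 "x+s"] by simp
  qed
  finally show ?thesis by simp
qed

lemma sec_low:
  fixes x :: "real^'d::finite"
  assumes th: "\<theta> > 0" and x: "x \<in> cbox 0 One" and w1: "w1 > 0" and w0: "w0 \<ge> w1" and w: "w \<ge> 0"
    and t_def: "t = root CARD('d) (w1 / \<theta>) / sqrt (real CARD('d))" and t2: "t \<le> 1/2"
  shows "emeasure (cubeU :: (real^'d) measure) {y. ((x,w0),(y,w)) \<in> adjR \<theta>} \<ge> ennreal (t ^ CARD('d))"
proof -
  let ?d = "CARD('d)"
  have d: "?d > 0" by simp
  have t0: "t \<ge> 0" unfolding t_def using th w1 by simp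
  define a :: "real^'d" where "a = (\<chi> i. if x$i \<ge> t then x$i - t else x$i)"
  define B where "B = cbox a (a + t *\<^sub>R One)"
  define Z where "Z = {y \<in> cbox 0 One. toric_dist x y \<le> 0}"
  define S where "S = {y. ((x,w0),(y,w)) \<in> (adjR \<theta> :: (((real^'d) \<times> real) \<times> _) set)}"
  have xi: "0 \<le> x$i" "x$i \<le> 1" for i using x by (auto simp: mem_box_cart)
  have Bcube: "B \<subseteq> cbox 0 One"
  proof
    fix y assume "y \<in> B"
    then have "a$i \<le> y$i \<and> y$i \<le> a$i + t" for i by (auto simp: B_def mem_box_cart)
    then show "y \<in> cbox 0 One" unfolding mem_box_cart using xi t2 t0
      by (auto simp: a_def split: if_splits) (smt (verit))+
  qed
  have close: "\<bar>x$i - y$i\<bar> \<le> t" if "y \<in> B" for y i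
  proof -
    have "a$i \<le> y$i \<and> y$i \<le> a$i + t" using that by (auto simp: B_def mem_box_cart)
    then show ?thesis by (auto simp: a_def split: if_splits)
  qed
  have dist: "toric_dist x y ^ ?d \<le> w1 / \<theta>" if "y \<in> B" for y
  proof -
    have ti: "(min \<bar>x$i - y$i\<bar> (1 - \<bar>x$i - y$i\<bar>))^2 \<le> t^2" for i
    proof -
      have c: "\<bar>x$i - y$i\<bar> \<le> t" by (rule close[OF that])
      then have "min \<bar>x$i - y$i\<bar> (1 - \<bar>x$i - y$i\<bar>) = \<bar>x$i - y$i\<bar>" using t2 by auto
      then show ?thesis using power_mono[OF c abs_ge_zero, of 2] by simp
    qed
    have "(\<Sum>i\<in>UNIV. (min \<bar>x$i - y$i\<bar> (1 - \<bar>x$i - y$i\<bar>))^2) \<le> (\<Sum>i\<in>(UNIV::'d set). t^2)"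
      by (intro sum_mono ti)
    also have "\<dots> = real ?d * t^2" by simp
    finally have "toric_dist x y \<le> sqrt (real ?d * t^2)" unfolding toric_dist_def by (rule real_sqrt_le_mono)
    also have "sqrt (real ?d * t^2) = sqrt (real ?d) * t" using t0 by (simp add: real_sqrt_mult)
    also have "\<dots> = root ?d (w1 / \<theta>)" unfolding t_def by simp
    finally have "toric_dist x y ^ ?d \<le> root ?d (w1 / \<theta>) ^ ?d"
      by (intro power_mono toric_dist_nonneg)
    also have "\<dots> = w1 / \<theta>" using th w1 d by (intro real_root_pow_pos2) auto
    finally show ?thesis .
  qed
  have BSZ: "B \<subseteq> S \<union> Z"
  proof
    fix y assume yB: "y \<in> B"
    show "y \<in> S \<union> Z"
    proof (cases "toric_dist x y \<le> 0")
      case True then show ?thesis using yB Bcube by (auto simp: Z_def)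
    next
      case False
      then have Tp: "toric_dist x y ^ ?d > 0" by simp
      have "\<theta> * toric_dist x y ^ ?d \<le> w1" using dist[OF yB] th by (simp add: field_simps)
      also have "\<dots> \<le> w0 + w" using w0 w by simp
      finally have "\<theta> \<le> (w0 + w) / toric_dist x y ^ ?d" using Tp by (simp add: le_divide_eq)
      then show ?thesis by (simp add: S_def adjR_def)
    qed
  qed
  have Bs: "B \<in> sets borel" by (simp add: B_def)
  have Zs: "Z \<in> sets borel" unfolding Z_def by measurable
  have Ss: "S \<in> sets borel" unfolding S_def by (rule sec_sets)
  have "ennreal (t ^ ?d) = emeasure lborel B" unfolding B_def using box_vol2[OF t0, of a] by simp
  also have "\<dots> = emeasure (cubeU :: (real^'d) measure) B"
    using emeasure_cubeU[OF Bs] Bcube by (simp add: Int_absorb1)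
  also have "\<dots> \<le> emeasure (cubeU :: (real^'d) measure) (S \<union> Z)"
    using BSZ Ss Zs by (intro emeasure_mono) (auto simp: sets_cubeU)
  also have "\<dots> \<le> emeasure (cubeU :: (real^'d) measure) S + emeasure (cubeU :: (real^'d) measure) Z"
    using Ss Zs by (intro emeasure_subadditive) (auto simp: sets_cubeU)
  also have "emeasure (cubeU :: (real^'d) measure) Z = 0"
  proof -
    have "emeasure (cubeU :: (real^'d) measure) Z = emeasure lborel (cbox 0 One \<inter> Z)" by (rule emeasure_cubeU[OF Zs])
    also have "cbox 0 One \<inter> Z = Z" by (auto simp: Z_def)
    also have "emeasure lborel Z = 0" unfolding Z_def by (rule zero_set_null[OF x])
    finally show ?thesis .
  qed
  finally show ?thesis by (simp add: S_def)
qed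


context wdist begin

lemma p_low:
  "\<exists>\<kappa>>0. \<exists>\<theta>0>0. \<forall>\<theta>\<ge>\<theta>0. measure (node_measure f \<Otimes>\<^sub>M node_measure f) (adjR \<theta> :: (((real^'d::finite) \<times> real) \<times> _) set) \<ge> \<kappa> / \<theta>"
proof -
  let ?d = "CARD('d)"
  let ?N = "(cubeU :: (real^'d) measure) \<Otimes>\<^sub>M wD f"
  interpret U: prob_space "cubeU :: (real^'d) measure" by (rule prob_cubeU)
  interpret D: prob_space "wD f" by (rule prob_wD)
  interpret UD: pair_prob_space "cubeU :: (real^'d) measure" "wD f" ..
  interpret NN2: prob_space "?N \<Otimes>\<^sub>M ?N" by (intro prob_space_pair UD.P.prob_space_axioms)
  have d: "?d > 0" by simp
  obtain w1 where w1: "w1 > 0" and \<beta>: "measure (wD f) {w1..} > 0" using exists_w1 by blast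
  define \<beta> where "\<beta> = measure (wD f) {w1..}"
  define s where "s = sqrt (real ?d)"
  have s1: "s \<ge> 1" unfolding s_def using d by simp
  define \<kappa> where "\<kappa> = \<beta> * w1 / s ^ ?d"
  have \<kappa>: "\<kappa> > 0" unfolding \<kappa>_def \<beta>_def using \<beta> w1 s1 by simp
  have th0: "w1 * 2 ^ ?d > 0" using w1 by simp
  have main: "measure (node_measure f \<Otimes>\<^sub>M node_measure f) (adjR \<theta> :: (((real^'d) \<times> real) \<times> _) set) \<ge> \<kappa> / \<theta>"
    if th: "\<theta> \<ge> w1 * 2 ^ ?d" for \<theta>
  proof -
    have thp: "\<theta> > 0" using th th0 by linarith
    define t where "t = root ?d (w1 / \<theta>) / s"
    have r0: "root ?d (w1 / \<theta>) \<ge> 0" using w1 thp by simp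
    have "w1 / \<theta> \<le> (1/2) ^ ?d"
      using th thp w1 by (simp add: divide_le_eq power_one_over field_simps)
    then have "root ?d (w1 / \<theta>) \<le> root ?d ((1/2) ^ ?d)" by (subst real_root_le_iff[OF d])
    also have "root ?d ((1/2) ^ ?d) = 1/2" by (rule real_root_power_cancel[OF d]) simp
    finally have rl: "root ?d (w1 / \<theta>) \<le> 1/2" .
    have t2: "t \<le> 1/2"
    proof -
      have "t \<le> root ?d (w1 / \<theta>)" unfolding t_def using r0 s1 by (simp add: divide_le_eq mult_le_cancel_left1)
      then show ?thesis using rl by linarith
    qed
    have t0: "t \<ge> 0" unfolding t_def using r0 s1 by simp
    have td: "t ^ ?d = (w1 / \<theta>) / s ^ ?d"
      unfolding t_def using w1 thp d by (simp add: power_divide)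
    define A where "A = cbox 0 (One :: real^'d) \<times> {w1..}"
    have As: "A \<in> sets ?N" unfolding A_def by simp
    have R: "adjR \<theta> \<in> sets (?N \<Otimes>\<^sub>M ?N)"
      using adjR_sets[of \<theta> f] by (simp add: node_measure_eq)
    have g_low: "ennreal (t ^ ?d) * indicator A u \<le> emeasure ?N (Pair u -` adjR \<theta>)" for u
    proof (cases "u \<in> A")
      case False then show ?thesis by simp
    next
      case True
      obtain x w0 where u: "u = (x, w0)" "x \<in> cbox 0 One" "w0 \<ge> w1" using True by (auto simp: A_def)
      have "ennreal (t ^ ?d) = (\<integral>\<^sup>+w. ennreal (t ^ ?d) \<partial>wD f)"
        using D.emeasure_space_1 by simp
      also have "\<dots> \<le> (\<integral>\<^sup>+w. emeasure (cubeU :: (real^'d) measure) ((\<lambda>y. (y, w)) -` (Pair u -` adjR \<theta>)) \<partial>wD f)"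
      proof (rule nn_integral_mono_AE)
        show "AE w in wD f. ennreal (t ^ ?d) \<le> emeasure (cubeU :: (real^'d) measure) ((\<lambda>y. (y, w)) -` (Pair u -` adjR \<theta>))"
          using AE_wD_pos
        proof eventually_elim
          case (elim w)
          have "ennreal (t ^ ?d) \<le> emeasure (cubeU :: (real^'d) measure) {y. ((x,w0),(y,w)) \<in> adjR \<theta>}"
            using sec_low[OF thp u(2) w1 u(3) _ _ t2, of w] elim t_def s_def by simp
          then show ?case by (simp add: u vimage_def)
        qed
      qed
      also have "\<dots> = emeasure ?N (Pair u -` adjR \<theta>)"
        by (rule UD.emeasure_pair_measure_alt2[OF sec_pair_sets, symmetric])
      finally show ?thesis using True by simp
    qed
    have "ennreal (\<kappa> / \<theta>) = ennreal (t ^ ?d) * emeasure ?N A"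
    proof -
      have "emeasure ?N A = emeasure (cubeU :: (real^'d) measure) (cbox 0 One) * emeasure (wD f) {w1..}"
        unfolding A_def by (intro D.emeasure_pair_measure_Times) auto
      also have "emeasure (cubeU :: (real^'d) measure) (cbox 0 One) = 1"
      proof -
        have cv: "emeasure lborel (cbox 0 (One::real^'d)) = 1" by (rule cube_vol)
        have "emeasure (cubeU :: (real^'d) measure) (cbox 0 One) = emeasure lborel (cbox 0 (One::real^'d) \<inter> cbox 0 One)"
          by (rule emeasure_cubeU) simp
        then show ?thesis using cv by simp
      qed
      also have "emeasure (wD f) {w1..} = ennreal \<beta>" by (simp add: \<beta>_def D.emeasure_eq_measure)
      finally have "emeasure ?N A = ennreal \<beta>" by simp
      moreover have "\<kappa> / \<theta> = t ^ ?d * \<beta>" by (simp add: td \<kappa>_def mult.commute)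
      ultimately show ?thesis using t0 \<beta> by (simp add: ennreal_mult \<beta>_def)
    qed
    also have "\<dots> = (\<integral>\<^sup>+u. ennreal (t ^ ?d) * indicator A u \<partial>?N)"
      using As by (simp add: nn_integral_cmult_indicator)
    also have "\<dots> \<le> (\<integral>\<^sup>+u. emeasure ?N (Pair u -` adjR \<theta>) \<partial>?N)"
      by (intro nn_integral_mono g_low)
    also have "\<dots> = emeasure (?N \<Otimes>\<^sub>M ?N) (adjR \<theta>)"
      by (rule UD.P.emeasure_pair_measure_alt[OF R, symmetric])
    finally have "ennreal (\<kappa> / \<theta>) \<le> emeasure (?N \<Otimes>\<^sub>M ?N) (adjR \<theta>)" .
    then show ?thesis by (simp add: node_measure_eq NN2.emeasure_eq_measure)
  qed
  show ?thesis using \<kappa> th0 main by blast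
qed

end


lemma arith_bounds:
  fixes n :: nat and L \<theta> p q m c \<kappa> K C Q0 :: real
  assumes n: "n \<ge> 3" and L: "L \<ge> 1" and c: "c > 0" and th: "\<theta> = c * real n / L" and \<kappa>: "\<kappa> > 0"
    and pl: "\<kappa> / \<theta> \<le> p" and pu: "p \<le> K / \<theta>" and q: "q = (C / \<theta>)^2 * Q0" and Q0: "Q0 \<ge> 0"
    and m1: "real n ^ 2 - real n \<le> 2 * m" and m2: "m \<le> real n ^ 2"
  shows "\<kappa> / (8 * c) * real n * L \<le> m * p / 2"
    and "3 * m * p / 2 \<le> 3 * K / (2 * c) * real n * L"
    and "4 * (m * p + 4 * real n ^ 3 * q) / (m * p) ^ 2 \<le> (16 * c / \<kappa> + 256 * C^2 * Q0 / \<kappa>^2) / real n"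
proof -
  have n0: "real n \<ge> 3" using n by simp
  have thp: "\<theta> > 0" using th c n0 L by simp
  have mge: "m \<ge> real n ^ 2 / 4"
  proof -
    have "real n ^ 2 \<ge> 2 * real n" using n0 by (simp add: power2_eq_square)
    then show ?thesis using m1 by linarith
  qed
  have p0: "p \<ge> 0" using pl \<kappa> thp by (smt (verit) divide_pos_pos)
  have pl': "p \<ge> \<kappa> * L / (c * real n)" using pl th by simp
  have pu': "p \<le> K * L / (c * real n)" using pu th by simp
  define X0 where "X0 = \<kappa> * real n * L / (4 * c)"
  have X0p: "X0 > 0" unfolding X0_def using \<kappa> n0 L c by simp
  have mpl: "m * p \<ge> X0"
  proof -
    have "m * p \<ge> (real n ^ 2 / 4) * (\<kappa> * L / (c * real n))"
    proof (rule mult_mono)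
      show "0 \<le> m" using mge by (smt (verit) zero_le_power2 divide_nonneg_pos)
      show "0 \<le> \<kappa> * L / (c * real n)" using \<kappa> L c n0 by simp
    qed (use mge pl' in auto)
    also have "(real n ^ 2 / 4) * (\<kappa> * L / (c * real n)) = X0"
      unfolding X0_def using n0 c by (simp add: power2_eq_square field_simps)
    finally show ?thesis .
  qed
  show "\<kappa> / (8 * c) * real n * L \<le> m * p / 2"
  proof -
    have "\<kappa> / (8 * c) * real n * L = X0 / 2" unfolding X0_def by (simp add: field_simps)
    then show ?thesis using mpl by linarith
  qed
  have mpu: "m * p \<le> K * real n * L / c"
  proof -
    have K0: "K \<ge> 0" using pu p0 thp by (smt (verit) divide_neg_pos)
    have "m * p \<le> real n ^ 2 * (K * L / (c * real n))"
      using m2 pu' p0 by (intro mult_mono) (auto intro: order_trans[OF mge])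
    also have "real n ^ 2 * (K * L / (c * real n)) = K * real n * L / c"
      using n0 c by (simp add: power2_eq_square field_simps)
    finally show ?thesis .
  qed
  show "3 * m * p / 2 \<le> 3 * K / (2 * c) * real n * L"
  proof -
    have eq1: "3 * K / (2 * c) * real n * L = 3 * (K * real n * L / c) / 2" by (simp add: field_simps)
    have eq2: "3 * m * p / 2 = 3 * (m * p) / 2" by simp
    have "3 * (m * p) / 2 \<le> 3 * (K * real n * L / c) / 2" using mpu by (intro divide_right_mono mult_left_mono) auto
    then show ?thesis by (simp only: eq1 eq2)
  qed
  have q0: "q \<ge> 0" using q Q0 by simp
  have nq: "real n ^ 3 * q = real n * C^2 * L^2 * Q0 / c^2"
    unfolding q th using n0 L c by (simp add: power2_eq_square power3_eq_cube field_simps)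
  have mpp: "m * p > 0" using mpl X0p by linarith
  have "4 * (m * p + 4 * real n ^ 3 * q) / (m * p) ^ 2 = 4 / (m * p) + 16 * (real n ^ 3 * q) / (m * p)^2"
  proof -
    have "m \<noteq> 0" "p \<noteq> 0" using mpp by auto
    then show ?thesis by (simp add: power2_eq_square field_simps)
  qed
  also have "4 / (m * p) \<le> 4 / X0" using mpl X0p by (intro divide_left_mono) auto
  also have "16 * (real n ^ 3 * q) / (m * p)^2 \<le> 16 * (real n ^ 3 * q) / X0^2"
    using mpl X0p q0 n0 mpp by (intro divide_left_mono power_mono mult_nonneg_nonneg) (auto intro!: mult_pos_pos)
  also have "4 / X0 = 16 * c / (\<kappa> * real n * L)" unfolding X0_def by (simp add: field_simps)
  also have "\<dots> \<le> 16 * c / (\<kappa> * real n)"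
  proof (rule divide_left_mono)
    have "\<kappa> * real n > 0" using \<kappa> n0 by simp
    then show "\<kappa> * real n \<le> \<kappa> * real n * L" using L by (simp add: mult_le_cancel_left1)
    show "0 \<le> 16 * c" using c by simp
    show "0 < \<kappa> * real n * L * (\<kappa> * real n)" using \<kappa> n0 L by simp
  qed
  also have "16 * (real n ^ 3 * q) / X0^2 = 256 * C^2 * Q0 / (\<kappa>^2 * real n)"
    unfolding nq X0_def using n0 L c \<kappa> by (simp add: power2_eq_square field_simps)
  also have "16 * c / (\<kappa> * real n) + 256 * C^2 * Q0 / (\<kappa>^2 * real n) = (16 * c / \<kappa> + 256 * C^2 * Q0 / \<kappa>^2) / real n"
    using n0 \<kappa> by (simp add: field_simps)
  finally show "4 * (m * p + 4 * real n ^ 3 * q) / (m * p) ^ 2 \<le> (16 * c / \<kappa> + 256 * C^2 * Q0 / \<kappa>^2) / real n"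
    by simp
qed


theorem lemma5:
  fixes f :: "real \<Rightarrow> real" and c :: real
  assumes dim: "CARD('d::finite) \<ge> 2"
    and f_nonneg: "\<And>x. f x \<ge> 0"
    and f_supp: "\<And>x. x < 0 \<Longrightarrow> f x = 0"
    and f_cont: "continuous_on {0..} f"
    and f_int: "integrable lborel f"
    and f_total: "integral\<^sup>L lborel f = 1"
    and f_mean: "integrable lborel (\<lambda>x. x * f x)"
    and f_var: "integrable lborel (\<lambda>x. x\<^sup>2 * f x)"
    and f_tail: "\<exists>\<nu>>0. (\<lambda>x. measure (density lborel (\<lambda>t. ennreal (f t))) {x..})
                          \<in> O[at_top](\<lambda>x. 1 / x powr (real CARD('d) + \<nu>))"
    and c_pos: "c > 0"
    and c_bound: "\<exists>\<alpha>\<in>{0<..<1}. c < \<alpha> * quantile_of f (1 - \<alpha>) / 4"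
  shows "\<exists>a b. 0 < a \<and> a \<le> b \<and>
    (\<lambda>n. measure (gtg_space f n :: (nat \<Rightarrow> (real^'d) \<times> real) measure)
        {\<omega> \<in> space (gtg_space f n).
           a * real n * ln (real n) \<le> real (gtg_edges (c * real n / ln (real n)) n \<omega>) \<and>
           real (gtg_edges (c * real n / ln (real n)) n \<omega>) \<le> b * real n * ln (real n)})
    \<longlonglongrightarrow> 1"
proof -
  interpret W: wdist f
    using f_nonneg f_supp f_int f_total f_mean f_var by unfold_locales auto
  let ?N = "node_measure f :: ((real^'d) \<times> real) measure"
  obtain \<kappa> \<theta>0 where \<kappa>: "\<kappa> > 0" and th0: "\<theta>0 > 0"
    and plow: "\<And>\<theta>. \<theta> \<ge> \<theta>0 \<Longrightarrow> measure (?N \<Otimes>\<^sub>M ?N) (adjR \<theta>) \<ge> \<kappa> / \<theta>"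
    using W.p_low[where 'd='d] by blast
  define C where "C = Cs TYPE('d)"
  define K where "K = C * (2 * W.mu)"
  have pup: "\<And>\<theta>. \<theta> > 0 \<Longrightarrow> measure (?N \<Otimes>\<^sub>M ?N) (adjR \<theta>) \<le> K / \<theta>"
    using W.p_up[where 'd='d] by (simp add: K_def C_def)
  have \<kappa>K: "\<kappa> \<le> K"
  proof -
    have "\<kappa> / \<theta>0 \<le> K / \<theta>0" using plow[of \<theta>0] pup[OF th0] by simp
    then show ?thesis using th0 by (simp add: divide_le_cancel)
  qed
  have Q0: "W.Q0 \<ge> 0" unfolding W.Q0_def by simp
  define a where "a = \<kappa> / (8 * c)"
  define b where "b = 3 * K / (2 * c)"
  define E where "E = 16 * c / \<kappa> + 256 * C^2 * W.Q0 / \<kappa>^2"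
  have a0: "a > 0" unfolding a_def using \<kappa> c_pos by simp
  have ab: "a \<le> b" unfolding a_def b_def using \<kappa> c_pos \<kappa>K by (simp add: field_simps)
  define P where "P n = measure (gtg_space f n :: (nat \<Rightarrow> (real^'d) \<times> real) measure)
        {\<omega> \<in> space (gtg_space f n).
           a * real n * ln (real n) \<le> real (gtg_edges (c * real n / ln (real n)) n \<omega>) \<and>
           real (gtg_edges (c * real n / ln (real n)) n \<omega>) \<le> b * real n * ln (real n)}" for n
  have probN: "prob_space ?N"
    unfolding node_measure_eq by (intro prob_space_pair prob_cubeU W.prob_wD)
  have lim_th: "filterlim (\<lambda>n::nat. c * (real n / ln (real n))) at_top sequentially"
  proof -
    have "filterlim (\<lambda>n::nat. real n / ln (real n)) at_top sequentially" by real_asymp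
    then show ?thesis by (rule filterlim_tendsto_pos_mult_at_top[OF tendsto_const c_pos])
  qed
  have ev_th: "eventually (\<lambda>n::nat. c * (real n / ln (real n)) \<ge> \<theta>0) sequentially"
    using lim_th by (simp add: filterlim_at_top)
  have ev: "eventually (\<lambda>n. 1 - E / real n \<le> P n) sequentially"
    using ev_th eventually_ge_at_top[of 3]
  proof eventually_elim
    case (elim n)
    have n3: "n \<ge> 3" using elim by simp
    define L where "L = ln (real n)"
    have L1: "L \<ge> 1"
    proof -
      have "exp 1 \<le> real n" using exp_le n3 by linarith
      then have "ln (exp 1) \<le> ln (real n)" using n3 by (subst ln_le_cancel_iff) auto
      then show ?thesis by (simp add: L_def)
    qed
    define \<theta> where "\<theta> = c * real n / L"
    have thp: "\<theta> > 0" unfolding \<theta>_def using c_pos L1 n3 by simp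
    have thge: "\<theta> \<ge> \<theta>0" using elim by (simp add: \<theta>_def L_def)
    define p where "p = measure (?N \<Otimes>\<^sub>M ?N) (adjR \<theta>)"
    define q where "q = (C / \<theta>)^2 * W.Q0"
    define m where "m = real (card {(i,j). i<j \<and> j<(n::nat)})"
    have pl: "\<kappa> / \<theta> \<le> p" unfolding p_def using plow[OF thge] .
    have pu: "p \<le> K / \<theta>" unfolding p_def using pup[OF thp] .
    have mb: "real n ^ 2 - real n \<le> 2 * m" "m \<le> real n ^ 2"
      using card_pairs_bounds[of n] unfolding m_def by auto
    note AB = arith_bounds[OF n3 L1 c_pos \<theta>_def \<kappa> pl pu q_def Q0 mb]
    have qe: "(\<integral>\<^sup>+u. emeasure ?N (Pair u -` adjR \<theta>) ^ 2 \<partial>?N) \<le> ennreal q"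
      using W.qe_bound[OF thp, where 'd='d] by (simp add: node_measure_eq q_def C_def)
    have ppos: "measure (?N \<Otimes>\<^sub>M ?N) (adjR \<theta>) > 0"
      using pl \<kappa> thp unfolding p_def by (smt (verit) divide_pos_pos)
    have q0: "q \<ge> 0" unfolding q_def using Q0 by simp
    have main: "measure (PiM {..<n} (\<lambda>_. ?N)) {\<omega>\<in>space (PiM {..<n} (\<lambda>_. ?N)).
            a * real n * L \<le> real (card {(i,j). i<j \<and> j<n \<and> (\<omega> i, \<omega> j)\<in>adjR \<theta>}) \<and> real (card {(i,j). i<j \<and> j<n \<and> (\<omega> i, \<omega> j)\<in>adjR \<theta>}) \<le> b * real n * L}
          \<ge> 1 - 4 * (m * p + 4 * real n ^ 3 * q) / (m * p) ^ 2"
      unfolding m_def p_def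
      by (rule edges_conc[OF probN space_node_measure adjR_sets adjR_sym qe ppos _ q0])
         (use n3 AB(1) AB(2) in \<open>simp_all add: a_def b_def m_def p_def\<close>)
    have eqset: "{\<omega>\<in>space (PiM {..<n} (\<lambda>_. ?N)).
            a * real n * L \<le> real (card {(i,j). i<j \<and> j<n \<and> (\<omega> i, \<omega> j)\<in>adjR \<theta>}) \<and> real (card {(i,j). i<j \<and> j<n \<and> (\<omega> i, \<omega> j)\<in>adjR \<theta>}) \<le> b * real n * L}
       = {\<omega> \<in> space (gtg_space f n :: (nat \<Rightarrow> (real^'d) \<times> real) measure).
           a * real n * ln (real n) \<le> real (gtg_edges (c * real n / ln (real n)) n \<omega>) \<and>
           real (gtg_edges (c * real n / ln (real n)) n \<omega>) \<le> b * real n * ln (real n)}"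
      by (simp add: gtg_space_def gtg_edges_def gtg_adj_def adjR_def \<theta>_def L_def)
    have "1 - E / real n \<le> 1 - 4 * (m * p + 4 * real n ^ 3 * q) / (m * p) ^ 2"
      using AB(3) by (simp add: E_def)
    also have "\<dots> \<le> P n" using main unfolding eqset P_def gtg_space_def by simp
    finally show ?case .
  qed
  have ev2: "eventually (\<lambda>n. P n \<le> 1) sequentially"
  proof (rule always_eventually, rule allI)
    fix n
    interpret PS: prob_space "gtg_space f n :: (nat \<Rightarrow> (real^'d) \<times> real) measure"
      unfolding gtg_space_def by (intro prob_space_PiM probN)
    show "P n \<le> 1" unfolding P_def by (rule PS.prob_le_1)
  qed
  have lim1: "(\<lambda>n. 1 - E / real n) \<longlonglongrightarrow> 1" by real_asymp
  have "P \<longlonglongrightarrow> 1" by (rule tendsto_sandwich[OF ev ev2 lim1 tendsto_const])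
  then show ?thesis using a0 ab unfolding P_def by blast
qed


end
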